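(* Let $r\in L_-$ be a primitive vector with $r^2=-2n$, $n\geq1$, such that $\Lambda_r=\langle r,\sigma^*(r)\rangle$ is primitive in $L_-$, and let $M_r=P/(L_+\oplus\Lambda_r)$ as below. Then: (a) if $n$ is even, then $M_r\cong\mathbb Z/2$ and $(r,L_-)=\mathbb Z$; (b) if $n$ is odd, then $M_r\cong\mathbb Z/2\oplus\mathbb Z/2$ if $(r,L_-)=2\mathbb Z$, and $M_r\cong\mathbb Z/2$ if $(r,L_-)=\mathbb Z$.
   Context: Fix the lattice $L_{K3}=U^{\oplus3}\oplus E_8^{\oplus2}$ (even unimodular, identified with $H^2(X_C,\mathbb Z)$ for $X_C=\{t^4=f(x,y,z)\}\subset\mathbb P^3$, $C=\{f=0\}$ a smooth plane quartic) together with the isometry $\sigma^*$ induced by $\sigma(x:y:z:t)=(x:y:z:it)$; $\tau^*=(\sigma^* )^2$. $L_\pm=\{x\in L_{K3}:\tau^*x=\pm x\}$; $\sigma^*$ preserves $L_\pm$. For $r\in L_-$, $(r,L_-)$ denotes the ideal $\{(r,y):y\in L_-\}\subset\mathbb Z$. $\Lambda_r^\perp$ is the orthogonal complement of $\Lambda_r$ in $L_-$, and $P$ is the orthogonal complement of $\Lambda_r^\perp$ in $L_{K3}$; then $L_+\oplus\Lambda_r\subset P$ with finite quotient $M_r$. *)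

theory Defs
  imports "HOL-Algebra.Elementary_Groups" "HOL-Library.Function_Algebras"
begin

text \<open>Coordinates 0..5: three hyperbolic planes U; 6..13 and 14..21: two copies of
  the (negative definite) E8 lattice, in the basis of simple roots.\<close>

definition e8_edge :: "nat \<Rightarrow> nat \<Rightarrow> bool" where
  "e8_edge a b \<longleftrightarrow> (a < 7 \<and> b < 7 \<and> (a = b + 1 \<or> b = a + 1)) \<or> (a = 4 \<and> b = 7) \<or> (a = 7 \<and> b = 4)"

definition e8_gram :: "nat \<Rightarrow> nat \<Rightarrow> int" where
  "e8_gram a b = (if a = b then -2 else if e8_edge a b then 1 else 0)"

definition k3_gram :: "nat \<Rightarrow> nat \<Rightarrow> int" where
  "k3_gram i j =
     (if i < 6 \<and> j < 6 then (if i div 2 = j div 2 \<and> i \<noteq> j then 1 else 0)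
      else if 6 \<le> i \<and> i < 14 \<and> 6 \<le> j \<and> j < 14 then e8_gram (i - 6) (j - 6)
      else if 14 \<le> i \<and> i < 22 \<and> 14 \<le> j \<and> j < 22 then e8_gram (i - 14) (j - 14)
      else 0)"

definition LK3 :: "(nat \<Rightarrow> int) set" where
  "LK3 = {x. \<forall>i\<ge>22. x i = 0}"

definition bil :: "(nat \<Rightarrow> int) \<Rightarrow> (nat \<Rightarrow> int) \<Rightarrow> int" where
  "bil x y = (\<Sum>i<22. \<Sum>j<22. x i * k3_gram i j * y j)"

definition smul :: "int \<Rightarrow> (nat \<Rightarrow> int) \<Rightarrow> (nat \<Rightarrow> int)" where
  "smul c x = (\<lambda>i. c * x i)"

definition mat_app :: "(nat \<Rightarrow> nat \<Rightarrow> int) \<Rightarrow> (nat \<Rightarrow> int) \<Rightarrow> (nat \<Rightarrow> int)" where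
  "mat_app S x = (\<lambda>i. if i < 22 then (\<Sum>j<22. S i j * x j) else 0)"

text \<open>Lattice-theoretic characterisation of the isometry sigma^* induced by
  (x:y:z:t) -> (x:y:z:it) on X_C: an isometry of order dividing 4,
  whose square tau has invariant lattice L_+ isometric to <2> + <-2>^7
  (pull-back of H^2 of the degree-2 del Pezzo surface X_C/tau), and whose own
  invariant lattice is spanned by a class h with h^2 = 4 (the hyperplane class).\<close>
definition quartic_K3_sigma :: "(nat \<Rightarrow> nat \<Rightarrow> int) \<Rightarrow> bool" where
  "quartic_K3_sigma S \<longleftrightarrow>
     (\<forall>x\<in>LK3. \<forall>y\<in>LK3. bil (mat_app S x) (mat_app S y) = bil x y) \<and>
     (\<forall>x\<in>LK3. mat_app S (mat_app S (mat_app S (mat_app S x))) = x) \<and>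
     (\<exists>e :: nat \<Rightarrow> nat \<Rightarrow> int.
        {x\<in>LK3. mat_app S (mat_app S x) = x} = {(\<lambda>i. \<Sum>k<8. c k * e k i) | c. True} \<and>
        (\<forall>k<8. \<forall>l<8. bil (e k) (e l) = (if k = l then (if k = 0 then 2 else -2) else 0))) \<and>
     (\<exists>h. {x\<in>LK3. mat_app S x = x} = {smul c h | c. True} \<and> bil h h = 4)"

definition Lplus :: "(nat \<Rightarrow> nat \<Rightarrow> int) \<Rightarrow> (nat \<Rightarrow> int) set" where
  "Lplus S = {x\<in>LK3. mat_app S (mat_app S x) = x}"

definition Lminus :: "(nat \<Rightarrow> nat \<Rightarrow> int) \<Rightarrow> (nat \<Rightarrow> int) set" where
  "Lminus S = {x\<in>LK3. mat_app S (mat_app S x) = - x}"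

definition primitive_vec :: "(nat \<Rightarrow> int) set \<Rightarrow> (nat \<Rightarrow> int) \<Rightarrow> bool" where
  "primitive_vec A r \<longleftrightarrow> r \<in> A \<and> r \<noteq> 0 \<and> (\<forall>k y. y \<in> A \<and> r = smul k y \<longrightarrow> \<bar>k\<bar> = 1)"

definition primitive_sub :: "(nat \<Rightarrow> int) set \<Rightarrow> (nat \<Rightarrow> int) set \<Rightarrow> bool" where
  "primitive_sub A B \<longleftrightarrow> B \<subseteq> A \<and> (\<forall>x\<in>A. \<forall>m::int. m \<noteq> 0 \<and> smul m x \<in> B \<longrightarrow> x \<in> B)"

definition Lam :: "(nat \<Rightarrow> nat \<Rightarrow> int) \<Rightarrow> (nat \<Rightarrow> int) \<Rightarrow> (nat \<Rightarrow> int) set" where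
  "Lam S r = {smul a r + smul b (mat_app S r) | a b. True}"

definition Lam_perp :: "(nat \<Rightarrow> nat \<Rightarrow> int) \<Rightarrow> (nat \<Rightarrow> int) \<Rightarrow> (nat \<Rightarrow> int) set" where
  "Lam_perp S r = {y\<in>Lminus S. \<forall>x\<in>Lam S r. bil x y = 0}"

definition Pr :: "(nat \<Rightarrow> nat \<Rightarrow> int) \<Rightarrow> (nat \<Rightarrow> int) \<Rightarrow> (nat \<Rightarrow> int) set" where
  "Pr S r = {x\<in>LK3. \<forall>y\<in>Lam_perp S r. bil x y = 0}"

definition lat_group :: "(nat \<Rightarrow> int) set \<Rightarrow> (nat \<Rightarrow> int) monoid" where
  "lat_group A = \<lparr>carrier = A, mult = (+), one = 0\<rparr>"

definition M_r :: "(nat \<Rightarrow> nat \<Rightarrow> int) \<Rightarrow> (nat \<Rightarrow> int) \<Rightarrow> (nat \<Rightarrow> int) set monoid" where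
  "M_r S r = lat_group (Pr S r) Mod {a + b | a b. a \<in> Lplus S \<and> b \<in> Lam S r}"

definition pair_ideal :: "(nat \<Rightarrow> nat \<Rightarrow> int) \<Rightarrow> (nat \<Rightarrow> int) \<Rightarrow> int set" where
  "pair_ideal S r = {bil r y | y. y \<in> Lminus S}"

end

theory Submission
  imports Defs "HOL-Library.Z2"
begin


lemma sum_fun_apply: "(sum f A) x = (\<Sum>a\<in>A. f a x)"
  by (induction A rule: infinite_finite_induct) auto

lemma diff_fun_apply: "(f - g) x = f x - (g x :: int)"
  by simp

lemma bil_add_left: "bil (x + y) z = bil x z + bil y z"
  unfolding bil_def by (simp add: algebra_simps sum.distrib)
lemma bil_add_right: "bil z (x + y) = bil z x + bil z y"
  unfolding bil_def by (simp add: algebra_simps sum.distrib)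
lemma bil_smul_left: "bil (smul c x) z = c * bil x z"
  unfolding bil_def smul_def by (simp add: algebra_simps sum_distrib_left)
lemma bil_smul_right: "bil z (smul c x) = c * bil z x"
  unfolding bil_def smul_def by (simp add: algebra_simps sum_distrib_left)
lemma bil_minus_left: "bil (- x) z = - bil x z"
  unfolding bil_def by (simp add: sum_negf)
lemma bil_minus_right: "bil z (- x) = - bil z x"
  unfolding bil_def by (simp add: sum_negf)
lemma bil_diff_left: "bil (x - y) z = bil x z - bil y z"
  unfolding bil_def by (simp add: algebra_simps sum_subtractf)
lemma bil_diff_right: "bil z (x - y) = bil z x - bil z y"
  unfolding bil_def by (simp add: algebra_simps sum_subtractf)
lemma bil_zero_left[simp]: "bil 0 z = 0"
  unfolding bil_def by simp
lemma bil_zero_right[simp]: "bil z 0 = 0"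
  unfolding bil_def by simp
lemma bil_sum_left: "bil (\<Sum>k\<in>A. f k) z = (\<Sum>k\<in>A. bil (f k) z)"
proof (induction A rule: infinite_finite_induct)
  case (infinite A) show ?case by (simp only: sum.infinite[OF infinite] bil_zero_left)
next
  case empty show ?case by (simp only: sum.empty bil_zero_left)
next
  case (insert x F) show ?case by (simp only: sum.insert[OF insert(1,2)] bil_add_left insert(3))
qed
lemma bil_sum_right: "bil z (\<Sum>k\<in>A. f k) = (\<Sum>k\<in>A. bil z (f k))"
proof (induction A rule: infinite_finite_induct)
  case (infinite A) show ?case by (simp only: sum.infinite[OF infinite] bil_zero_right)
next
  case empty show ?case by (simp only: sum.empty bil_zero_right)
next
  case (insert x F) show ?case by (simp only: sum.insert[OF insert(1,2)] bil_add_right insert(3))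
qed

lemma e8_edge_sym: "e8_edge a b = e8_edge b a"
  unfolding e8_edge_def by auto
lemma e8_gram_sym: "e8_gram a b = e8_gram b a"
  unfolding e8_gram_def using e8_edge_sym by auto
lemma k3_gram_sym: "k3_gram i j = k3_gram j i"
  unfolding k3_gram_def using e8_gram_sym by auto

lemma bil_sym: "bil x y = bil y x"
  unfolding bil_def
  by (subst sum.swap) (simp add: k3_gram_sym mult.commute mult.left_commute)

lemmas bil_lin = bil_add_left bil_add_right bil_smul_left bil_smul_right bil_minus_left
  bil_minus_right bil_diff_left bil_diff_right

lemma smul_apply[simp]: "smul c x i = c * x i" unfolding smul_def by simp

lemma LK3_add[intro]: "x \<in> LK3 \<Longrightarrow> y \<in> LK3 \<Longrightarrow> x + y \<in> LK3" unfolding LK3_def by auto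
lemma LK3_diff[intro]: "x \<in> LK3 \<Longrightarrow> y \<in> LK3 \<Longrightarrow> x - y \<in> LK3" unfolding LK3_def by auto
lemma LK3_minus[intro]: "x \<in> LK3 \<Longrightarrow> - x \<in> LK3" unfolding LK3_def by auto
lemma LK3_smul[intro]: "x \<in> LK3 \<Longrightarrow> smul c x \<in> LK3" unfolding LK3_def by auto
lemma LK3_zero[intro, simp]: "0 \<in> LK3" unfolding LK3_def by auto
lemma LK3_sum[intro]: "(\<And>k. k \<in> A \<Longrightarrow> f k \<in> LK3) \<Longrightarrow> (\<Sum>k\<in>A. f k) \<in> LK3"
  unfolding LK3_def by (auto simp: sum_fun_apply)
lemma mat_app_LK3[intro, simp]: "mat_app S x \<in> LK3"
  unfolding LK3_def mat_app_def by auto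

lemma mat_app_add: "mat_app S (x + y) = mat_app S x + mat_app S y"
  unfolding mat_app_def by (auto simp: algebra_simps sum.distrib)
lemma mat_app_smul: "mat_app S (smul c x) = smul c (mat_app S x)"
  unfolding mat_app_def smul_def by (auto simp: algebra_simps sum_distrib_left)
lemma mat_app_minus: "mat_app S (- x) = - mat_app S x"
  unfolding mat_app_def by (auto simp: sum_negf)
lemma mat_app_diff: "mat_app S (x - y) = mat_app S x - mat_app S y"
  unfolding mat_app_def by (auto simp: algebra_simps sum_subtractf)
lemma mat_app_zero[simp]: "mat_app S 0 = 0"
  unfolding mat_app_def by auto
lemma mat_app_sum: "mat_app S (\<Sum>k\<in>A. f k) = (\<Sum>k\<in>A. mat_app S (f k))"
proof (induction A rule: infinite_finite_induct)
  case (infinite A) show ?case by (simp only: sum.infinite[OF infinite] mat_app_zero)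
next
  case empty show ?case by (simp only: sum.empty mat_app_zero)
next
  case (insert x F) show ?case by (simp only: sum.insert[OF insert(1,2)] mat_app_add insert(3))
qed

lemmas mat_lin = mat_app_add mat_app_smul mat_app_minus mat_app_diff

lemma smul_add: "smul c (x + y) = smul c x + smul c y" unfolding smul_def by (auto simp: algebra_simps)
lemma smul_smul: "smul c (smul d x) = smul (c*d) x" unfolding smul_def by (auto simp: algebra_simps)
lemma smul_one[simp]: "smul 1 x = x" unfolding smul_def by auto
lemma smul_zero[simp]: "smul 0 x = 0" unfolding smul_def by auto
lemma smul_two: "smul 2 x = x + x" unfolding smul_def by (auto simp: algebra_simps)
lemma smul_cancel: "c \<noteq> 0 \<Longrightarrow> smul c x = smul c y \<Longrightarrow> x = y"
  unfolding smul_def by (auto simp: fun_eq_iff)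



definition ginv_list :: "int list list" where "ginv_list = [[0, 1, 0, 0, 0, 0, 0, 0, 0, 0, 0, 0, 0, 0, 0, 0, 0, 0, 0, 0, 0, 0], [1, 0, 0, 0, 0, 0, 0, 0, 0, 0, 0, 0, 0, 0, 0, 0, 0, 0, 0, 0, 0, 0], [0, 0, 0, 1, 0, 0, 0, 0, 0, 0, 0, 0, 0, 0, 0, 0, 0, 0, 0, 0, 0, 0], [0, 0, 1, 0, 0, 0, 0, 0, 0, 0, 0, 0, 0, 0, 0, 0, 0, 0, 0, 0, 0, 0], [0, 0, 0, 0, 0, 1, 0, 0, 0, 0, 0, 0, 0, 0, 0, 0, 0, 0, 0, 0, 0, 0], [0, 0, 0, 0, 1, 0, 0, 0, 0, 0, 0, 0, 0, 0, 0, 0, 0, 0, 0, 0, 0, 0], [0, 0, 0, 0, 0, 0, -2, -3, -4, -5, -6, -4, -2, -3, 0, 0, 0, 0, 0, 0, 0, 0], [0, 0, 0, 0, 0, 0, -3, -6, -8, -10, -12, -8, -4, -6, 0, 0, 0, 0, 0, 0, 0, 0], [0, 0, 0, 0, 0, 0, -4, -8, -12, -15, -18, -12, -6, -9, 0, 0, 0, 0, 0, 0, 0, 0], [0, 0, 0, 0, 0, 0, -5, -10, -15, -20, -24, -16, -8, -12, 0, 0, 0, 0, 0, 0, 0, 0], [0, 0, 0, 0, 0, 0, -6, -12, -18, -24, -30, -20, -10, -15, 0, 0, 0, 0, 0, 0, 0, 0], [0, 0, 0, 0, 0, 0, -4, -8, -12, -16, -20, -14, -7, -10, 0, 0, 0,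 0, 0, 0, 0, 0], [0, 0, 0, 0, 0, 0, -2, -4, -6, -8, -10, -7, -4, -5, 0, 0, 0, 0, 0, 0, 0, 0], [0, 0, 0, 0, 0, 0, -3, -6, -9, -12, -15, -10, -5, -8, 0, 0, 0, 0, 0, 0, 0, 0], [0, 0, 0, 0, 0, 0, 0, 0, 0, 0, 0, 0, 0, 0, -2, -3, -4, -5, -6, -4, -2, -3], [0, 0, 0, 0, 0, 0, 0, 0, 0, 0, 0, 0, 0, 0, -3, -6, -8, -10, -12, -8, -4, -6], [0, 0, 0, 0, 0, 0, 0, 0, 0, 0, 0, 0, 0, 0, -4, -8, -12, -15, -18, -12, -6, -9], [0, 0, 0, 0, 0, 0, 0, 0, 0, 0, 0, 0, 0, 0, -5, -10, -15, -20, -24, -16, -8, -12], [0, 0, 0, 0, 0, 0, 0, 0, 0, 0, 0, 0, 0, 0, -6, -12, -18, -24, -30, -20, -10, -15], [0, 0, 0, 0, 0, 0, 0, 0, 0, 0, 0, 0, 0, 0, -4, -8, -12, -16, -20, -14, -7, -10], [0, 0, 0, 0, 0, 0, 0, 0, 0, 0, 0, 0, 0, 0, -2, -4, -6, -8, -10, -7, -4, -5], [0, 0, 0, 0, 0, 0, 0, 0, 0, 0, 0, 0, 0, 0, -3, -6, -9, -12, -15, -10, -5, -8]]"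
definition ginv :: "nat \<Rightarrow> nat \<Rightarrow> int" where "ginv i j = ginv_list ! i ! j"

lemma ginv_mat: "map (\<lambda>k. map (\<lambda>j. sum_list (map (\<lambda>i. ginv k i * k3_gram i j) [0..<22])) [0..<22]) [0..<22]
   = map (\<lambda>k. map (\<lambda>j. if k = j then 1 else 0) [0..<22]) [0..<22]"
  unfolding ginv_def ginv_list_def by code_simp

lemma ginv_ok: assumes "k < 22" "j < 22"
  shows "(\<Sum>i<22. ginv k i * k3_gram i j) = (if k = j then 1 else 0)"
proof -
  have H: "\<forall>x\<in>{0..<22}. \<forall>xa\<in>{0..<22}. (\<Sum>i\<leftarrow>[0..<22]. ginv x i * k3_gram i xa) = (if x = xa then 1 else 0)"
    using ginv_mat by simp
  have "sum_list (map (\<lambda>i. ginv k i * k3_gram i j) [0..<22]) = (\<Sum>i<22. ginv k i * k3_gram i j)"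
    by (simp add: sum_set_upt_conv_sum_list_nat[symmetric] atLeast_upt)
  then show ?thesis using H assms by auto
qed

lemma unimod: "\<exists>x\<in>LK3. \<forall>y. bil x y = (\<Sum>j<22. \<phi> j * y j)"
proof -
  define x where "x = (\<lambda>i. if i < 22 then (\<Sum>k<22. \<phi> k * ginv k i) else 0)"
  have xL: "x \<in> LK3" unfolding LK3_def x_def by auto
  have c: "(\<Sum>i<22. x i * k3_gram i j) = \<phi> j" if j: "j < 22" for j
  proof -
    have "(\<Sum>i<22. x i * k3_gram i j) = (\<Sum>i<22. \<Sum>k<22. \<phi> k * ginv k i * k3_gram i j)"
      by (simp add: x_def sum_distrib_right)
    also have "\<dots> = (\<Sum>k<22. \<phi> k * (\<Sum>i<22. ginv k i * k3_gram i j))"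
      by (subst sum.swap) (simp add: sum_distrib_left mult.assoc)
    also have "\<dots> = (\<Sum>k<22. \<phi> k * (if k = j then 1 else 0))"
      using ginv_ok j by simp
    also have "\<dots> = \<phi> j" using j by (simp add: if_distrib cong: if_cong)
    finally show ?thesis .
  qed
  have "bil x y = (\<Sum>j<22. \<phi> j * y j)" for y
  proof -
    have "bil x y = (\<Sum>j<22. (\<Sum>i<22. x i * k3_gram i j) * y j)"
      unfolding bil_def by (subst sum.swap) (simp add: sum_distrib_right)
    also have "\<dots> = (\<Sum>j<22. \<phi> j * y j)" using c by simp
    finally show ?thesis .
  qed
  then show ?thesis using xL by blast
qed

lemma unimod_delta: assumes "k < 22" shows "\<exists>x\<in>LK3. \<forall>y. bil x y = y k"
proof -
  obtain x where "x \<in> LK3" "\<forall>y. bil x y = (\<Sum>j<22. (if j = k then 1 else 0) * y j)"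
    using unimod[of "\<lambda>j. if j = k then 1 else 0"] by blast
  moreover have "(\<Sum>j<22. (if j = k then 1 else 0) * y j) = y k" for y :: "nat \<Rightarrow> int"
  proof -
    have "(\<Sum>j<22. (if j = k then 1 else 0) * y j) = (\<Sum>j<22. if j = k then y j else 0)"
      by (rule sum.cong) auto
    then show ?thesis using assms by simp
  qed
  ultimately show ?thesis by auto
qed

lemma nondeg: assumes "z \<in> LK3" "\<And>y. y \<in> LK3 \<Longrightarrow> bil z y = 0" shows "z = 0"
proof
  fix k
  show "z k = 0 k"
  proof (cases "k < 22")
    case True
    then obtain x where "x \<in> LK3" "\<forall>y. bil x y = y k" using unimod_delta by blast
    then show ?thesis using assms(2)[of x] bil_sym[of z x] by simp
  next
    case False then show ?thesis using assms(1) unfolding LK3_def by simp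
  qed
qed

lemma even_coords: assumes "z \<in> LK3" "\<And>y. y \<in> LK3 \<Longrightarrow> even (bil z y)" shows "even (z k)"
proof (cases "k < 22")
  case True
  then obtain x where "x \<in> LK3" "\<forall>y. bil x y = y k" using unimod_delta by blast
  then show ?thesis using assms(2)[of x] bil_sym[of z x] by simp
next
  case False then show ?thesis using assms(1) unfolding LK3_def by simp
qed

lemma half_LK3: assumes "z \<in> LK3" "\<And>k. even (z k)" shows "\<exists>w\<in>LK3. z = smul 2 w"
proof -
  define w where "w = (\<lambda>i. z i div 2)"
  have "z = smul 2 w" using assms(2) unfolding w_def smul_def by (auto simp: fun_eq_iff)
  moreover have "w \<in> LK3" using assms(1) unfolding LK3_def w_def by auto
  ultimately show ?thesis by blast
qed

lemma even_half: assumes "z \<in> LK3" "\<And>y. y \<in> LK3 \<Longrightarrow> even (bil z y)" shows "\<exists>w\<in>LK3. z = smul 2 w"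
  using half_LK3 even_coords assms by blast

lemma sym_double_sum_even:
  fixes a :: "nat \<Rightarrow> nat \<Rightarrow> int"
  assumes "\<And>i j. a i j = a j i"
  shows "even ((\<Sum>i<n. \<Sum>j<n. a i j) - (\<Sum>i<n. a i i))"
proof (induction n)
  case 0 then show ?case by simp
next
  case (Suc n)
  have e: "(\<Sum>i<n. a i n) = (\<Sum>j<n. a n j)" using assms by simp
  have "(\<Sum>i<Suc n. \<Sum>j<Suc n. a i j) - (\<Sum>i<Suc n. a i i)
      = ((\<Sum>i<n. \<Sum>j<n. a i j) - (\<Sum>i<n. a i i)) + 2 * (\<Sum>j<n. a n j)"
    by (simp add: sum.distrib e)
  then show ?case using Suc by simp
qed

lemma k3_diag: "k3_gram i i = (if i < 6 then 0 else if i < 22 then -2 else 0)"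
proof -
  have "e8_gram a a = -2" for a unfolding e8_gram_def by simp
  then show ?thesis unfolding k3_gram_def by (cases "i < 6"; cases "i < 14"; cases "i < 22") simp_all
qed

lemma k3_diag_even: "even (k3_gram i i)"
  unfolding k3_diag by simp

lemma bil_even: "even (bil z z)"
proof -
  have "even ((\<Sum>i<22. \<Sum>j<22. z i * k3_gram i j * z j) - (\<Sum>i<22. z i * k3_gram i i * z i))"
    by (rule sym_double_sum_even) (metis k3_gram_sym mult.commute mult.assoc)
  moreover have "even (\<Sum>i<22. z i * k3_gram i i * z i)"
    by (rule dvd_sum) (simp add: k3_diag_even)
  ultimately have "even (((\<Sum>i<22. \<Sum>j<22. z i * k3_gram i j * z j) - (\<Sum>i<22. z i * k3_gram i i * z i))
     + (\<Sum>i<22. z i * k3_gram i i * z i))" by (rule dvd_add)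
  then show ?thesis unfolding bil_def by simp
qed



definition lc :: "(nat \<Rightarrow> nat \<Rightarrow> int) \<Rightarrow> (nat \<Rightarrow> int) \<Rightarrow> (nat \<Rightarrow> int)" where
  "lc e c = (\<Sum>k<8. smul (c k) (e k))"

lemma lc_alt: "(\<lambda>i. \<Sum>k<8. c k * e k i) = lc e c"
  unfolding lc_def by (auto simp: fun_eq_iff sum_fun_apply)

definition gk :: "nat \<Rightarrow> int" where "gk k = (if k = 0 then 2 else -2)"

lemma gk_nz[simp]: "gk k \<noteq> 0" unfolding gk_def by auto
lemma gk_cases: "gk k = 2 \<or> gk k = -2" unfolding gk_def by auto

locale K3 =
  fixes S :: "nat \<Rightarrow> nat \<Rightarrow> int" and e :: "nat \<Rightarrow> nat \<Rightarrow> int" and h :: "nat \<Rightarrow> int"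
  assumes iso: "\<forall>x\<in>LK3. \<forall>y\<in>LK3. bil (mat_app S x) (mat_app S y) = bil x y"
    and ord4: "\<forall>x\<in>LK3. mat_app S (mat_app S (mat_app S (mat_app S x))) = x"
    and Lp_span: "{x\<in>LK3. mat_app S (mat_app S x) = x} = {(\<lambda>i. \<Sum>k<8. c k * e k i) | c. True}"
    and e_gram: "\<forall>k<8. \<forall>l<8. bil (e k) (e l) = (if k = l then (if k = 0 then 2 else -2) else 0)"
    and fix_h: "{x\<in>LK3. mat_app S x = x} = {smul c h | c. True}"
    and h_sq: "bil h h = 4"
begin

abbreviation sg where "sg x \<equiv> mat_app S x"
abbreviation tau where "tau x \<equiv> mat_app S (mat_app S x)"

lemma Lp_span': "{x\<in>LK3. tau x = x} = range (lc e)"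
  using Lp_span by (auto simp: lc_alt)

lemma lc_in: "lc e c \<in> LK3" "tau (lc e c) = lc e c"
  using Lp_span' by blast+

lemma Lp_lc: assumes "x \<in> LK3" "tau x = x" obtains c where "x = lc e c"
  using Lp_span' assms by blast

lemma e_gram': "k < 8 \<Longrightarrow> l < 8 \<Longrightarrow> bil (e k) (e l) = (if k = l then gk k else 0)"
  using e_gram unfolding gk_def by auto

lemma lc_delta: "k < 8 \<Longrightarrow> lc e (\<lambda>j. if j = k then 1 else 0) = e k"
proof -
  assume k: "k < 8"
  have "lc e (\<lambda>j. if j = k then 1 else 0) = (\<Sum>j<8. if j = k then e j else 0)"
    unfolding lc_def by (intro sum.cong) auto
  also have "\<dots> = e k" using k by simp
  finally show ?thesis .
qed

lemma e_in: "k < 8 \<Longrightarrow> e k \<in> LK3" "k < 8 \<Longrightarrow> tau (e k) = e k"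
  using lc_in[of "\<lambda>j. if j = k then 1 else 0"] lc_delta by auto

lemma bil_lc_e: "l < 8 \<Longrightarrow> bil (lc e c) (e l) = c l * gk l"
proof -
  assume l: "l < 8"
  have "bil (lc e c) (e l) = (\<Sum>k<8. c k * bil (e k) (e l))"
    unfolding lc_def by (simp add: bil_sum_left bil_smul_left)
  also have "\<dots> = (\<Sum>k<8. c k * (if k = l then gk l else 0))"
    using e_gram' l by (intro sum.cong) auto
  also have "\<dots> = c l * gk l" using l by (simp add: if_distrib cong: if_cong)
  finally show ?thesis .
qed

lemma lc_add: "lc e c + lc e d = lc e (\<lambda>k. c k + d k)"
  unfolding lc_def by (simp add: sum.distrib[symmetric] smul_def fun_eq_iff sum_fun_apply algebra_simps)
lemma lc_smul: "smul a (lc e c) = lc e (\<lambda>k. a * c k)"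
  unfolding lc_def by (simp add: smul_def fun_eq_iff sum_fun_apply sum_distrib_left algebra_simps)
lemma lc_diff: "lc e c - lc e d = lc e (\<lambda>k. c k - d k)"
  unfolding lc_def by (simp add: sum_subtractf[symmetric] smul_def fun_eq_iff sum_fun_apply algebra_simps)

lemma lc_coords: assumes "x \<in> LK3" "tau x = x" shows "x = lc e (\<lambda>k. bil x (e k) div gk k)"
proof -
  obtain c where c: "x = lc e c" using Lp_lc assms by blast
  have "lc e c = lc e (\<lambda>k. bil x (e k) div gk k)"
    unfolding lc_def using bil_lc_e c by (intro sum.cong) auto
  then show ?thesis using c by simp
qed

lemma iso': "x \<in> LK3 \<Longrightarrow> y \<in> LK3 \<Longrightarrow> bil (sg x) (sg y) = bil x y"
  using iso by auto
lemma ord4': "x \<in> LK3 \<Longrightarrow> sg (sg (sg (sg x))) = x"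
  using ord4 by auto
lemma tau_tau: "x \<in> LK3 \<Longrightarrow> tau (tau x) = x"
  using ord4 by auto
lemma tau_iso: "x \<in> LK3 \<Longrightarrow> y \<in> LK3 \<Longrightarrow> bil (tau x) (tau y) = bil x y"
  using iso by auto
lemma tau_adj: assumes "x \<in> LK3" "y \<in> LK3" shows "bil (tau x) y = bil x (tau y)"
proof -
  have "bil (tau x) y = bil (tau x) (tau (tau y))" using tau_tau assms by simp
  also have "\<dots> = bil x (tau y)" using tau_iso assms by simp
  finally show ?thesis .
qed
lemma sg_adj: assumes "x \<in> LK3" "y \<in> LK3" shows "bil (sg x) y = bil x (sg (tau y))"
proof -
  have "bil (sg x) y = bil (sg x) (sg (sg (tau y)))" using ord4' assms by simp
  also have "\<dots> = bil x (sg (tau y))" using iso' assms by simp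
  finally show ?thesis .
qed

lemma h_in: "h \<in> LK3" "sg h = h"
proof -
  have "smul 1 h \<in> {x\<in>LK3. sg x = x}" using fix_h by blast
  then show "h \<in> LK3" "sg h = h" by auto
qed

lemma fix_h': assumes "x \<in> LK3" "sg x = x" obtains c where "x = smul c h"
  using fix_h assms by blast

definition Lp where "Lp = {x\<in>LK3. tau x = x}"
definition Lm where "Lm = {x\<in>LK3. tau x = - x}"

lemma Lp_eq: "Lplus S = Lp" unfolding Lplus_def Lp_def by simp
lemma Lm_eq: "Lminus S = Lm" unfolding Lminus_def Lm_def by simp

lemma LpI: "x \<in> LK3 \<Longrightarrow> tau x = x \<Longrightarrow> x \<in> Lp" unfolding Lp_def by simp
lemma LmI: "x \<in> LK3 \<Longrightarrow> tau x = - x \<Longrightarrow> x \<in> Lm" unfolding Lm_def by simp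
lemma LpD: "x \<in> Lp \<Longrightarrow> x \<in> LK3" "x \<in> Lp \<Longrightarrow> tau x = x" unfolding Lp_def by auto
lemma LmD: "x \<in> Lm \<Longrightarrow> x \<in> LK3" "x \<in> Lm \<Longrightarrow> tau x = - x" unfolding Lm_def by auto

lemma plus_tau_Lp: "x \<in> LK3 \<Longrightarrow> x + tau x \<in> Lp"
  by (rule LpI) (auto simp: mat_app_add tau_tau)
lemma minus_tau_Lm: "x \<in> LK3 \<Longrightarrow> x - tau x \<in> Lm"
  by (rule LmI) (auto simp: mat_app_diff tau_tau)

lemma Lm_add: "x \<in> Lm \<Longrightarrow> y \<in> Lm \<Longrightarrow> x + y \<in> Lm"
  unfolding Lm_def by (auto simp: mat_app_add)
lemma Lm_diff: "x \<in> Lm \<Longrightarrow> y \<in> Lm \<Longrightarrow> x - y \<in> Lm"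
  unfolding Lm_def by (auto simp: mat_app_diff)
lemma Lm_smul: "x \<in> Lm \<Longrightarrow> smul c x \<in> Lm"
  unfolding Lm_def by (auto simp: mat_app_smul mat_app_minus)
lemma Lm_sg: "x \<in> Lm \<Longrightarrow> sg x \<in> Lm"
  unfolding Lm_def by (auto simp: mat_app_minus)
lemma Lp_add: "x \<in> Lp \<Longrightarrow> y \<in> Lp \<Longrightarrow> x + y \<in> Lp"
  unfolding Lp_def by (auto simp: mat_app_add)
lemma Lp_diff: "x \<in> Lp \<Longrightarrow> y \<in> Lp \<Longrightarrow> x - y \<in> Lp"
  unfolding Lp_def by (auto simp: mat_app_diff)
lemma Lp_smul: "x \<in> Lp \<Longrightarrow> smul c x \<in> Lp"
  unfolding Lp_def by (auto simp: mat_app_smul)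
lemma Lp_sg: "x \<in> Lp \<Longrightarrow> sg x \<in> Lp"
  unfolding Lp_def by auto
lemma Lp_zero: "0 \<in> Lp" unfolding Lp_def by auto
lemma Lm_zero: "0 \<in> Lm" unfolding Lm_def by auto

lemma Lp_Lm_orth: assumes "u \<in> Lp" "v \<in> Lm" shows "bil u v = 0"
proof -
  have "bil u v = bil (tau u) (tau v)" using tau_iso[of u v] assms by (simp add: LpD(1) LmD(1))
  also have "\<dots> = bil u (- v)" using assms LpD LmD by simp
  also have "\<dots> = - bil u v" by (rule bil_minus_right)
  finally show ?thesis by simp
qed

lemma Lm_sg_orth: assumes "v \<in> Lm" shows "bil v (sg v) = 0"
proof -
  have "bil v (sg v) = bil (sg v) (tau v)" using iso'[of v "sg v"] assms by (simp add: LmD(1))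
  also have "\<dots> = bil (sg v) (- v)" using assms LmD by simp
  also have "\<dots> = - bil v (sg v)" by (simp only: bil_minus_right bil_sym[of "sg v" v])
  finally show ?thesis by simp
qed

lemma Lp_sg_formula: assumes "u \<in> Lp"
  shows "even (bil u h)" "u + sg u = smul (bil u h div 2) h"
proof -
  have uL: "u \<in> LK3" "tau u = u" using assms LpD by auto
  have "u + sg u \<in> LK3" "sg (u + sg u) = u + sg u" using uL by (auto simp: mat_app_add)
  then obtain c where c: "u + sg u = smul c h" using fix_h' by blast
  have "bil (sg u) h = bil u h" using iso'[of u h] h_in uL by simp
  then have "bil (u + sg u) h = 2 * bil u h" by (simp add: bil_add_left)
  moreover have "bil (smul c h) h = 4 * c" by (simp add: bil_smul_left h_sq)
  ultimately have "2 * bil u h = 4 * c" using c by simp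
  then have "bil u h = 2 * c" by simp
  then show "even (bil u h)" "u + sg u = smul (bil u h div 2) h" using c by auto
qed

lemma split_even: assumes "w \<in> LK3" "\<And>l. l < 8 \<Longrightarrow> even (bil w (e l))"
  shows "\<exists>u\<in>Lp. \<exists>v\<in>Lm. w = u + v"
proof -
  have wp: "w + tau w \<in> LK3" "tau (w + tau w) = w + tau w"
    using plus_tau_Lp[OF assms(1)] LpD by auto
  define c where "c = (\<lambda>k. bil (w + tau w) (e k) div gk k)"
  have wc: "w + tau w = lc e c" unfolding c_def by (rule lc_coords[OF wp])
  have ce: "even (c k)" if k: "k < 8" for k
  proof -
    have "bil (w + tau w) (e k) = 2 * bil w (e k)"
      using tau_adj[of w "e k"] e_in k assms(1) by (simp add: bil_add_left)
    then have "c k * gk k = 2 * bil w (e k)" using bil_lc_e[OF k, of c] wc by simp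
    then show ?thesis using gk_cases[of k] assms(2)[OF k] by (elim disjE; simp; presburger)
  qed
  define u where "u = lc e (\<lambda>k. c k div 2)"
  have u2: "u + u = w + tau w"
  proof -
    have "u + u = lc e (\<lambda>k. c k div 2 + c k div 2)" unfolding u_def by (simp add: lc_add)
    also have "\<dots> = lc e c" unfolding lc_def using ce by (intro sum.cong) auto
    finally show ?thesis using wc by simp
  qed
  have uLp: "u \<in> Lp" unfolding u_def using lc_in by (auto intro: LpI)
  have "w - u \<in> Lm"
  proof (rule LmI)
    show "w - u \<in> LK3" using assms(1) uLp LpD by auto
    have "tau (w - u) = tau w - u" using uLp LpD by (simp add: mat_app_diff)
    also have "\<dots> = - (w - u)"
    proof -
      have "tau w = u + u - w" using u2 by (simp add: algebra_simps)
      then show ?thesis by (simp add: algebra_simps)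
    qed
    finally show "tau (w - u) = - (w - u)" .
  qed
  then show ?thesis using uLp by force
qed

end


context K3 begin

lemma bil_lc_left: "bil (lc e c) y = (\<Sum>j<8. c j * bil (e j) y)"
  unfolding lc_def by (simp add: bil_sum_left bil_smul_left)

lemma indep: assumes "\<exists>j<8. odd (c j)" shows "\<exists>y\<in>LK3. odd (\<Sum>j<8. c j * bil (e j) y)"
proof (rule ccontr)
  assume "\<not> ?thesis"
  then have ev: "\<And>y. y \<in> LK3 \<Longrightarrow> even (bil (lc e c) y)" by (auto simp: bil_lc_left)
  obtain w where w: "w \<in> LK3" "lc e c = smul 2 w" using even_half[OF lc_in(1) ev] by blast
  have "smul 2 (tau w) = smul 2 w" using w lc_in(2)[of c] by (simp add: mat_app_smul)
  then have tw: "tau w = w" by (rule smul_cancel[rotated]) simp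
  obtain d where d: "w = lc e d" using Lp_lc[OF w(1) tw] by blast
  obtain j where j: "j < 8" "odd (c j)" using assms by blast
  have "c j * gk j = bil (lc e c) (e j)" using bil_lc_e[OF j(1)] by simp
  also have "\<dots> = 2 * bil w (e j)" using w(2) by (simp add: bil_smul_left)
  also have "\<dots> = 2 * (d j * gk j)" using d bil_lc_e[OF j(1)] by simp
  finally have "c j = 2 * d j" by simp
  then show False using j by simp
qed

lemma glue_parity: "m \<le> 8 \<Longrightarrow> \<forall>k<m. \<exists>y\<in>LK3. \<forall>j<m. even (bil (e j) y - (if j = k then 1 else 0))"
proof (induction m)
  case 0 then show ?case by simp
next
  case (Suc m)
  have m8: "m < 8" using Suc.prems by simp
  have IH': "\<forall>k<m. \<exists>y\<in>LK3. \<forall>j<m. even (bil (e j) y - (if j = k then 1 else 0))"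
    by (rule Suc.IH) (use Suc.prems in simp)
  have "\<forall>k\<in>{..<m}. \<exists>y. y \<in> LK3 \<and> (\<forall>j<m. even (bil (e j) y - (if j = k then 1 else 0)))"
    using IH' by (metis lessThan_iff)
  then have "\<exists>x. \<forall>k\<in>{..<m}. x k \<in> LK3 \<and> (\<forall>j<m. even (bil (e j) (x k) - (if j = k then 1 else 0)))"
    by (rule bchoice)
  then obtain x where x: "\<forall>k\<in>{..<m}. x k \<in> LK3 \<and> (\<forall>j<m. even (bil (e j) (x k) - (if j = k then 1 else 0)))"
    by blast
  define c where "c = (\<lambda>j. if j = m then 1 else if j < m then - bil (e m) (x j) else (0::int))"
  have "\<exists>j<8. odd (c j)" using m8 unfolding c_def by (intro exI[of _ m]) auto
  then obtain z where z: "z \<in> LK3" "odd (\<Sum>j<8. c j * bil (e j) z)" using indep by blast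
  have "(\<Sum>j<8. c j * bil (e j) z) = (\<Sum>j<Suc m. c j * bil (e j) z)"
    using m8 by (intro sum.mono_neutral_right) (auto simp: c_def)
  also have "\<dots> = (\<Sum>j<m. c j * bil (e j) z) + bil (e m) z" by (simp add: c_def)
  also have "(\<Sum>j<m. c j * bil (e j) z) = - (\<Sum>j<m. bil (e j) z * bil (e m) (x j))"
    by (simp add: c_def sum_negf[symmetric] mult.commute)
  finally have zodd: "odd (bil (e m) z - (\<Sum>j<m. bil (e j) z * bil (e m) (x j)))"
    using z(2) by simp
  define xm where "xm = z - (\<Sum>j<m. smul (bil (e j) z) (x j))"
  have xmL: "xm \<in> LK3" unfolding xm_def using z x by (intro LK3_diff LK3_sum LK3_smul) auto
  have fxm: "bil (e i) xm = bil (e i) z - (\<Sum>j<m. bil (e j) z * bil (e i) (x j))" for i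
    unfolding xm_def by (simp add: bil_diff_right bil_sum_right bil_smul_right)
  have xm_low: "even (bil (e i) xm)" if i: "i < m" for i
  proof -
    have "(\<Sum>j<m. bil (e j) z * bil (e i) (x j)) - bil (e i) z
        = (\<Sum>j<m. bil (e j) z * (bil (e i) (x j) - (if i = j then 1 else 0)))"
    proof -
      have "(\<Sum>j<m. bil (e j) z * (if i = j then 1 else 0)) = bil (e i) z"
      proof -
        have "(\<Sum>j<m. bil (e j) z * (if i = j then 1 else 0)) = (\<Sum>j<m. if i = j then bil (e j) z else 0)"
          by (rule sum.cong) auto
        then show ?thesis using i by simp
      qed
      then show ?thesis by (simp add: right_diff_distrib sum_subtractf)
    qed
    moreover have "even (\<Sum>j<m. bil (e j) z * (bil (e i) (x j) - (if i = j then 1 else 0)))"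
    proof (rule dvd_sum)
      fix j assume "j \<in> {..<m}"
      then have "even (bil (e i) (x j) - (if i = j then 1 else 0))" using x i by auto
      then show "even (bil (e j) z * (bil (e i) (x j) - (if i = j then 1 else 0)))" by simp
    qed
    ultimately have "even ((\<Sum>j<m. bil (e j) z * bil (e i) (x j)) - bil (e i) z)" by simp
    then show ?thesis using fxm[of i] by (metis minus_diff_eq even_minus)
  qed
  have xm_m: "odd (bil (e m) xm)" using fxm[of m] zodd by simp
  define x' where "x' = (\<lambda>k. if k = m then xm else x k - smul (bil (e m) (x k)) xm)"
  show ?case
  proof (intro allI impI)
    fix k assume k: "k < Suc m"
    show "\<exists>y\<in>LK3. \<forall>j<Suc m. even (bil (e j) y - (if j = k then 1 else 0))"
    proof (cases "k = m")
      case True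
      have "\<forall>j<Suc m. even (bil (e j) xm - (if j = k then 1 else 0))"
        using xm_low xm_m True by (auto simp: less_Suc_eq)
      then show ?thesis using xmL by blast
    next
      case False
      then have km: "k < m" using k by simp
      have xk: "x k \<in> LK3" "\<forall>j<m. even (bil (e j) (x k) - (if j = k then 1 else 0))" using x km by auto
      have y: "bil (e j) (x' k) = bil (e j) (x k) - bil (e m) (x k) * bil (e j) xm" for j
        unfolding x'_def using False by (simp add: bil_diff_right bil_smul_right)
      have "even (bil (e j) (x' k) - (if j = k then 1 else 0))" if j: "j < Suc m" for j
      proof (cases "j = m")
        case True
        have "bil (e j) (x' k) = bil (e m) (x k) * (1 - bil (e m) xm)"
          using y[of j] True by (simp add: algebra_simps)
        moreover have "even (1 - bil (e m) xm)" using xm_m by simp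
        ultimately show ?thesis using True km by simp
      next
        case False
        then have jm: "j < m" using j by simp
        have p1: "even (bil (e m) (x k) * bil (e j) xm)" using xm_low[OF jm] by simp
        have p2: "even (bil (e j) (x k) - (if j = k then 1 else 0))" using xk jm by auto
        have ev2: "even ((bil (e j) (x k) - (if j = k then 1 else 0)) - bil (e m) (x k) * bil (e j) xm)"
          using dvd_diff[OF p2 p1] .
        have eq: "bil (e j) (x' k) - (if j = k then 1 else 0) = (bil (e j) (x k) - (if j = k then 1 else 0)) - bil (e m) (x k) * bil (e j) xm"
          using y[of j] by simp
        show ?thesis unfolding eq by (rule ev2)
      qed
      moreover have "x' k \<in> LK3" unfolding x'_def using False xk xmL by auto
      ultimately show ?thesis by blast
    qed
  qed
qed

lemma glue: "k < 8 \<Longrightarrow> \<exists>y\<in>LK3. \<forall>j<8. even (bil (e j) y - (if j = k then 1 else 0))"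
  using glue_parity[of 8] by simp

lemma glue_exact: assumes k: "k < 8" shows "\<exists>y\<in>LK3. y + tau y = e k"
proof -
  obtain y where y: "y \<in> LK3" "\<forall>j<8. even (bil (e j) y - (if j = k then 1 else 0))"
    using glue[OF k] by blast
  have p: "y + tau y \<in> LK3" "tau (y + tau y) = y + tau y" using plus_tau_Lp[OF y(1)] LpD by auto
  define c where "c = (\<lambda>l. bil (y + tau y) (e l) div gk l)"
  have pc: "y + tau y = lc e c" unfolding c_def by (rule lc_coords[OF p])
  have ce: "even (c l - (if l = k then 1 else 0))" if l: "l < 8" for l
  proof -
    have "bil (y + tau y) (e l) = bil y (e l) + bil (tau y) (e l)" by (rule bil_add_left)
    also have "\<dots> = bil y (e l) + bil y (e l)" using tau_adj[of y "e l"] e_in l y(1) by simp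
    also have "\<dots> = 2 * bil (e l) y" using bil_sym[of y "e l"] by simp
    finally have "bil (y + tau y) (e l) = 2 * bil (e l) y" .
    then have "c l * gk l = 2 * bil (e l) y" using bil_lc_e[OF l, of c] pc by simp
    moreover have yl: "even (bil (e l) y - (if l = k then 1 else 0))" using y(2) l by blast
    ultimately show ?thesis using gk_cases[of l] by (cases "l = k"; elim disjE; simp; presburger)
  qed
  define d where "d = (\<lambda>l. (c l - (if l = k then 1 else 0)) div 2)"
  define y' where "y' = y - lc e d"
  have "y' + tau y' = (y + tau y) - (lc e d + lc e d)"
    unfolding y'_def using lc_in(2)[of d] by (simp add: mat_app_diff algebra_simps)
  also have "\<dots> = lc e (\<lambda>l. c l - (d l + d l))" using pc by (simp add: lc_add lc_diff)
  also have "\<dots> = lc e (\<lambda>l. if l = k then 1 else 0)"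
    unfolding lc_def using ce by (intro sum.cong refl) (auto simp: d_def)
  also have "\<dots> = e k" using lc_delta[OF k] .
  finally show ?thesis using y(1) lc_in(1)[of d] unfolding y'_def by blast
qed

lemma e_Lp: "k < 8 \<Longrightarrow> e k \<in> Lp" using e_in by (auto intro: LpI)

lemma char_e: assumes k: "k < 8" shows "odd (bil (e k) h div 2)"
proof
  assume ev: "even (bil (e k) h div 2)"
  obtain y where y: "y \<in> LK3" "y + tau y = e k" using glue_exact[OF k] by blast
  define ym where "ym = y - tau y"
  have ymL: "ym \<in> Lm" unfolding ym_def using minus_tau_Lm[OF y(1)] .
  have y2: "y + y = e k + ym" unfolding ym_def using y(2) by (simp add: algebra_simps)
  define c where "c = bil (e k) h div 2"
  have ec: "e k + sg (e k) = smul c h" unfolding c_def using Lp_sg_formula(2)[OF e_Lp[OF k]] .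
  obtain c' where c': "c = c' + c'" using ev unfolding c_def by (metis evenE mult_2)
  define z where "z = y + sg y - smul c' h"
  have zL: "z \<in> LK3" unfolding z_def using y(1) h_in by auto
  have sgyy: "sg (y + y) = sg y + sg y" by (rule mat_app_add)
  have "z + z = (y + y) + sg (y + y) - (smul c' h + smul c' h)"
    unfolding z_def sgyy by (simp add: algebra_simps)
  also have "\<dots> = (e k + sg (e k)) + (ym + sg ym) - smul c h"
    unfolding y2 c' by (simp add: mat_app_add smul_def algebra_simps fun_eq_iff)
  also have "\<dots> = ym + sg ym" using ec by simp
  finally have zz: "z + z = ym + sg ym" .
  have ymL3: "ym \<in> LK3" using ymL LmD by auto
  have "bil (ym + sg ym) (ym + sg ym) = bil ym ym + bil ym (sg ym) + (bil (sg ym) ym + bil (sg ym) (sg ym))"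
    by (simp only: bil_add_left bil_add_right)
  also have "\<dots> = 2 * bil ym ym"
    using Lm_sg_orth[OF ymL] bil_sym[of "sg ym" ym] iso'[OF ymL3 ymL3] by simp
  finally have A0: "bil (ym + sg ym) (ym + sg ym) = 2 * bil ym ym" .
  have "bil (z + z) (z + z) = 4 * bil z z" by (simp only: bil_add_left bil_add_right)
  then have A: "4 * bil z z = 2 * bil ym ym" using A0 zz by simp
  have eo: "bil (e k) ym = 0" using Lp_Lm_orth[OF e_Lp[OF k] ymL] .
  have "4 * bil y y = bil (y + y) (y + y)" by (simp only: bil_add_left bil_add_right)
  also have "\<dots> = bil (e k) (e k) + bil (e k) ym + (bil ym (e k) + bil ym ym)"
    unfolding y2 by (simp only: bil_add_left bil_add_right)
  also have "\<dots> = bil (e k) (e k) + bil ym ym"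
    using eo bil_sym[of ym "e k"] by simp
  also have "bil (e k) (e k) = gk k" using e_gram' k by simp
  finally have B: "4 * bil y y = gk k + bil ym ym" .
  have "even (bil z z)" by (rule bil_even)
  then show False using A B gk_cases[of k] by (elim disjE; simp; presburger)
qed

lemma h_not_even: "\<not> (\<exists>w\<in>LK3. h = smul 2 w)"
proof
  assume "\<exists>w\<in>LK3. h = smul 2 w"
  then obtain w where w: "w \<in> LK3" "h = smul 2 w" by blast
  have "smul 2 (sg w) = smul 2 w" using w h_in by (simp add: mat_app_smul)
  then have "sg w = w" by (rule smul_cancel[rotated]) simp
  then obtain c where wc: "w = smul c h" using fix_h' w(1) by blast
  from w(2) have "h = smul 2 (smul c h)" unfolding wc .
  then have "h = smul (2 * c) h" unfolding smul_smul .
  then have "bil h h = (2 * c) * bil h h" by (metis bil_smul_left)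
  then have "4 = 8 * c" using h_sq by simp
  then show False by presburger
qed

lemma aux4: fixes c g q :: int assumes "odd q" "g = 2 \<or> g = -2" shows "4 dvd (c * c * g - c * (2 * q))"
proof -
  obtain b where b: "q = 2 * b + 1" using assms(1) by (metis oddE)
  show ?thesis
  proof (cases "even c")
    case True
    then obtain a where a: "c = 2 * a" by blast
    have "c * c * g - c * (2 * q) = 4 * (a * a * g - a * q)" unfolding a by (simp add: algebra_simps)
    then show ?thesis by simp
  next
    case False
    then obtain a where a: "c = 2 * a + 1" by (metis oddE)
    show ?thesis using assms(2)
    proof
      assume g: "g = 2"
      have "c * c * g - c * (2 * q) = 4 * (c * (a - b))" unfolding g a b by (simp add: algebra_simps)
      then show ?thesis by simp
    next
      assume g: "g = -2"
      have "c * c * g - c * (2 * q) = 4 * (- c * (a + b + 1))" unfolding g a b by (simp add: algebra_simps)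
      then show ?thesis by simp
    qed
  qed
qed

lemma char_Lp: assumes u: "u \<in> Lp" shows "4 dvd (bil u u - bil u h)"
proof -
  obtain c where c: "u = lc e c" using Lp_lc LpD[OF u] by blast
  have uu: "bil u u = (\<Sum>k<8. c k * (c k * gk k))"
    unfolding c bil_lc_left using bil_lc_e bil_sym by (intro sum.cong refl) (metis lessThan_iff)
  have uh: "bil u h = (\<Sum>k<8. c k * bil (e k) h)" unfolding c bil_lc_left ..
  have "bil u u - bil u h = (\<Sum>k<8. c k * c k * gk k - c k * (2 * (bil (e k) h div 2)))"
  proof -
    have "2 * (bil (e k) h div 2) = bil (e k) h" if "k < 8" for k
      using Lp_sg_formula(1)[OF e_Lp[OF that]] by simp
    then show ?thesis unfolding uu uh by (simp add: sum_subtractf[symmetric] mult.assoc)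
  qed
  also have "4 dvd \<dots>" by (rule dvd_sum) (use char_e gk_cases aux4 in auto)
  finally show ?thesis .
qed

end


lemma card_hom:
  fixes f :: "'a::ab_group_add \<Rightarrow> 'b::ab_group_add"
  assumes fin: "finite A" and z: "0 \<in> A" and cl: "\<And>x y. x \<in> A \<Longrightarrow> y \<in> A \<Longrightarrow> x - y \<in> A"
    and hom: "\<And>x y. x \<in> A \<Longrightarrow> y \<in> A \<Longrightarrow> f (x - y) = f x - f y"
  shows "card A = card {x\<in>A. f x = 0} * card (f ` A)"
proof -
  let ?K = "{x\<in>A. f x = 0}"
  have f0: "f 0 = 0" using hom[OF z z] by simp
  have neg: "0 - a \<in> A" if "a \<in> A" for a using cl[OF z that] .
  have addA: "k + a \<in> A" if "k \<in> A" "a \<in> A" for k a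
    using cl[OF that(1) neg[OF that(2)]] by simp
  have fib: "card {x\<in>A. f x = b} = card ?K" if b: "b \<in> f ` A" for b
  proof -
    obtain a0 where a0: "a0 \<in> A" "f a0 = b" using b by blast
    have "bij_betw (\<lambda>x. x - a0) {x\<in>A. f x = b} ?K"
    proof (rule bij_betwI[where g = "\<lambda>k. k + a0"])
      show "(\<lambda>x. x - a0) \<in> {x\<in>A. f x = b} \<rightarrow> ?K" using a0 cl hom by auto
      show "(\<lambda>k. k + a0) \<in> ?K \<rightarrow> {x\<in>A. f x = b}"
      proof
        fix k assume k: "k \<in> ?K"
        have kA: "k \<in> A" "f k = 0" using k by auto
        have h1: "f (k - (0 - a0)) = f k - f (0 - a0)" by (rule hom[OF kA(1) neg[OF a0(1)]])
        have h2: "f (0 - a0) = f 0 - f a0" by (rule hom[OF z a0(1)])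
        have eqk: "k - (0 - a0) = k + a0" by simp
        have "f (k + a0) = f k - (f 0 - f a0)" using h1 h2 eqk by metis
        then show "k + a0 \<in> {x\<in>A. f x = b}" using kA a0 f0 addA by auto
      qed
    qed auto
    then show ?thesis by (rule bij_betw_same_card)
  qed
  have "A = (\<Union>b\<in>f ` A. {x\<in>A. f x = b})" by auto
  then have "card A = card (\<Union>b\<in>f ` A. {x\<in>A. f x = b})" by simp
  also have "\<dots> = (\<Sum>b\<in>f ` A. card {x\<in>A. f x = b})"
    using fin by (intro card_UN_disjoint) auto
  also have "\<dots> = (\<Sum>b\<in>f ` A. card ?K)" using fib by (intro sum.cong) auto
  also have "\<dots> = card ?K * card (f ` A)" by simp
  finally show ?thesis .
qed

lemma of_int_bit: "(of_int k :: bit) = (if even k then 0 else 1)"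
proof -
  have k: "k = 2 * (k div 2) + k mod 2" by simp
  have "(of_int k :: bit) = of_int (2 * (k div 2)) + of_int (k mod 2)"
    by (subst k) (simp only: of_int_add)
  also have "(of_int (2 * (k div 2)) :: bit) = 0" by simp
  finally show ?thesis by (cases "even k") (auto simp: odd_iff_mod_2_eq_one even_iff_mod_2_eq_zero)
qed

definition rho :: "(nat \<Rightarrow> int) \<Rightarrow> (nat \<Rightarrow> bit)" where
  "rho x = (\<lambda>i. if i < 22 then of_int (x i) else 0)"

lemma rho_add: "rho (x + y) = rho x + rho y" unfolding rho_def by (auto simp: fun_eq_iff)
lemma rho_diff: "rho (x - y) = rho x - rho y" unfolding rho_def by (auto simp: fun_eq_iff)
lemma rho_zero[simp]: "rho 0 = 0" unfolding rho_def by (auto simp: fun_eq_iff)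

lemma rho_eq0: "rho x = 0 \<longleftrightarrow> (\<forall>i<22. even (x i))"
  unfolding rho_def by (auto simp: fun_eq_iff of_int_bit split: if_splits)

lemma rho_smul2[simp]: "rho (smul 2 w) = 0"
  unfolding rho_eq0 by simp

lemma rho_eq0_half: assumes "x \<in> LK3" "rho x = 0" shows "\<exists>w\<in>LK3. x = smul 2 w"
proof (rule half_LK3[OF assms(1)])
  fix k show "even (x k)"
    using assms unfolding rho_eq0 LK3_def by (cases "k < 22") auto
qed

lemma rho_eq_iff: assumes "x \<in> LK3" "y \<in> LK3"
  shows "rho x = rho y \<longleftrightarrow> (\<exists>w\<in>LK3. x - y = smul 2 w)"
proof
  assume "rho x = rho y"
  then have "rho (x - y) = 0" by (simp add: rho_diff)
  then show "\<exists>w\<in>LK3. x - y = smul 2 w" using rho_eq0_half assms by blast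
next
  assume "\<exists>w\<in>LK3. x - y = smul 2 w"
  then have "rho (x - y) = 0" by auto
  then show "rho x = rho y" by (simp add: rho_diff)
qed

definition ind :: "nat set \<Rightarrow> (nat \<Rightarrow> int)" where
  "ind J = (\<lambda>i. if i \<in> J then 1 else 0)"

lemma card_V: "finite (rho ` LK3)" "card (rho ` LK3) = 2 ^ 22"
proof -
  have indL: "J \<subseteq> {..<22} \<Longrightarrow> ind J \<in> LK3" for J unfolding ind_def LK3_def by auto
  have eq: "rho ` LK3 = (\<lambda>J. rho (ind J)) ` Pow {..<22}"
  proof
    show "rho ` LK3 \<subseteq> (\<lambda>J. rho (ind J)) ` Pow {..<22}"
    proof
      fix v assume "v \<in> rho ` LK3"
      then obtain x where x: "x \<in> LK3" "v = rho x" by blast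
      have "rho x = rho (ind {i. i < 22 \<and> odd (x i)})"
        unfolding rho_def ind_def by (auto simp: fun_eq_iff of_int_bit)
      then show "v \<in> (\<lambda>J. rho (ind J)) ` Pow {..<22}" using x by auto
    qed
  next
    show "(\<lambda>J. rho (ind J)) ` Pow {..<22} \<subseteq> rho ` LK3" using indL by auto
  qed
  have inj: "inj_on (\<lambda>J. rho (ind J)) (Pow {..<22})"
  proof (rule inj_onI)
    fix J J' assume J: "J \<in> Pow {..<22}" "J' \<in> Pow {..<22}" and e: "rho (ind J) = rho (ind J')"
    show "J = J'"
    proof
      show "J \<subseteq> J'"
      proof
        fix i assume i: "i \<in> J"
        then have "i < 22" using J by auto
        then have "rho (ind J) i = 1" using i unfolding rho_def ind_def by simp
        then have "rho (ind J') i = 1" using e by simp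
        then show "i \<in> J'" unfolding rho_def ind_def by (auto split: if_splits)
      qed
      show "J' \<subseteq> J"
      proof
        fix i assume i: "i \<in> J'"
        then have "i < 22" using J by auto
        then have "rho (ind J') i = 1" using i unfolding rho_def ind_def by simp
        then have "rho (ind J) i = 1" using e by simp
        then show "i \<in> J" unfolding rho_def ind_def by (auto split: if_splits)
      qed
    qed
  qed
  show "finite (rho ` LK3)" unfolding eq by simp
  show "card (rho ` LK3) = 2 ^ 22" unfolding eq card_image[OF inj] by (simp add: card_Pow)
qed

context K3 begin

definition lift :: "(nat \<Rightarrow> bit) \<Rightarrow> (nat \<Rightarrow> int)" where
  "lift v = (\<lambda>i. if i < 22 \<and> v i = 1 then 1 else 0)"

lemma lift_LK3: "lift v \<in> LK3" unfolding lift_def LK3_def by auto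

lemma rho_lift: assumes "v \<in> rho ` LK3" shows "rho (lift v) = v"
proof -
  obtain x where "v = rho x" using assms by blast
  then have "\<forall>i\<ge>22. v i = 0" unfolding rho_def by auto
  then show ?thesis unfolding rho_def lift_def by (auto simp: fun_eq_iff)
qed

definition pp :: "(nat \<Rightarrow> int) \<Rightarrow> (nat \<Rightarrow> int)" where "pp x = x + sg x"

definition NN :: "(nat \<Rightarrow> bit) \<Rightarrow> (nat \<Rightarrow> bit)" where "NN v = rho (pp (lift v))"

lemma pp_LK3: "x \<in> LK3 \<Longrightarrow> pp x \<in> LK3" unfolding pp_def by auto
lemma pp_diff: "pp (x - y) = pp x - pp y" unfolding pp_def by (simp add: mat_app_diff algebra_simps)
lemma pp_smul: "pp (smul c x) = smul c (pp x)" unfolding pp_def by (simp add: mat_app_smul smul_add)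

lemma NN_rho: assumes x: "x \<in> LK3" shows "NN (rho x) = rho (pp x)"
proof -
  have "rho (lift (rho x)) = rho x" using rho_lift x by blast
  then obtain w where w: "w \<in> LK3" "lift (rho x) - x = smul 2 w"
    using rho_eq_iff[OF lift_LK3 x] by blast
  have "pp (lift (rho x)) - pp x = smul 2 (pp w)" using w by (simp add: pp_diff[symmetric] pp_smul)
  then have "rho (pp (lift (rho x))) = rho (pp x)"
    using rho_eq_iff[OF pp_LK3[OF lift_LK3] pp_LK3[OF x]] pp_LK3[OF w(1)] by blast
  then show ?thesis unfolding NN_def .
qed

abbreviation V where "V \<equiv> rho ` LK3"

lemma NN_V: "v \<in> V \<Longrightarrow> NN v \<in> V"
  using NN_rho pp_LK3 by auto

lemma V_diff: "u \<in> V \<Longrightarrow> v \<in> V \<Longrightarrow> u - v \<in> V"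
  by (auto simp: rho_diff[symmetric])

lemma NN_diff: assumes "u \<in> V" "v \<in> V" shows "NN (u - v) = NN u - NN v"
proof -
  obtain a b where ab: "a \<in> LK3" "b \<in> LK3" "u = rho a" "v = rho b" using assms by blast
  have "NN (u - v) = NN (rho (a - b))" using ab by (simp add: rho_diff)
  also have "\<dots> = rho (pp (a - b))" using NN_rho ab by auto
  also have "\<dots> = NN u - NN v" using ab NN_rho by (simp add: pp_diff rho_diff)
  finally show ?thesis .
qed

lemma hom_sub: "A \<subseteq> V \<Longrightarrow> x \<in> A \<Longrightarrow> y \<in> A \<Longrightarrow> NN (x - y) = NN x - NN y"
  using NN_diff by blast

lemma image_V: "A \<subseteq> V \<Longrightarrow> NN ` A \<subseteq> V"
  using NN_V by auto

lemma image_0: assumes "A \<subseteq> V" "0 \<in> A" shows "0 \<in> NN ` A"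
proof -
  have "NN 0 = 0" using NN_diff[of 0 0] assms by auto
  then show ?thesis using assms(2) by force
qed

lemma image_cl: assumes "A \<subseteq> V" "\<And>x y. x \<in> A \<Longrightarrow> y \<in> A \<Longrightarrow> x - y \<in> A"
  and "x \<in> NN ` A" "y \<in> NN ` A" shows "x - y \<in> NN ` A"
proof -
  obtain a b where ab: "a \<in> A" "b \<in> A" "x = NN a" "y = NN b" using assms(3,4) by blast
  then have "a \<in> V" "b \<in> V" using assms(1) by auto
  then have "x - y = NN (a - b)" using NN_diff[of a b] ab by simp
  moreover have "a - b \<in> A" using assms(2) ab by blast
  ultimately show "x - y \<in> NN ` A" by blast
qed

lemma Lp_plus_tau: assumes u: "u \<in> Lp" shows "\<exists>y\<in>LK3. u = y + tau y"
proof -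
  obtain c where c: "u = lc e c" using Lp_lc LpD[OF u] by blast
  have "\<forall>k\<in>{..<8}. \<exists>y. y \<in> LK3 \<and> y + tau y = e k" using glue_exact by blast
  then have "\<exists>yy. \<forall>k\<in>{..<8}. yy k \<in> LK3 \<and> yy k + tau (yy k) = e k" by (rule bchoice)
  then obtain yy where yy: "\<forall>k\<in>{..<8}. yy k \<in> LK3 \<and> yy k + tau (yy k) = e k" by blast
  define y where "y = (\<Sum>k<8. smul (c k) (yy k))"
  have "y \<in> LK3" unfolding y_def using yy by (intro LK3_sum LK3_smul) auto
  moreover have "y + tau y = u"
  proof -
    have "y + tau y = (\<Sum>k<8. smul (c k) (yy k + tau (yy k)))"
      unfolding y_def by (simp add: mat_app_sum mat_app_smul smul_add sum.distrib)
    also have "\<dots> = lc e c" unfolding lc_def using yy by (intro sum.cong) auto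
    finally show ?thesis using c by simp
  qed
  ultimately show ?thesis by metis
qed

lemma pp_pp: "x \<in> LK3 \<Longrightarrow> pp (pp x) = (x + tau x) + smul 2 (sg x)"
  unfolding pp_def by (simp add: mat_app_add smul_two algebra_simps)

lemma I2_eq: "NN ` NN ` V = rho ` Lp"
proof -
  have "NN ` NN ` V = (\<lambda>x. rho (pp (pp x))) ` LK3"
    using NN_rho pp_LK3 by (auto simp: image_image)
  also have "\<dots> = (\<lambda>x. rho (x + tau x)) ` LK3"
    using pp_pp by (auto simp: rho_add)
  also have "\<dots> = rho ` Lp"
  proof
    show "(\<lambda>x. rho (x + tau x)) ` LK3 \<subseteq> rho ` Lp" using plus_tau_Lp by auto
    show "rho ` Lp \<subseteq> (\<lambda>x. rho (x + tau x)) ` LK3" using Lp_plus_tau by auto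
  qed
  finally show ?thesis .
qed

lemma card_rho_Lp: "card (rho ` Lp) = 2 ^ 8"
proof -
  define F where "F = (\<lambda>J. rho (lc e (ind J)))"
  have eq: "rho ` Lp = F ` Pow {..<8}"
  proof
    show "rho ` Lp \<subseteq> F ` Pow {..<8}"
    proof
      fix v assume "v \<in> rho ` Lp"
      then obtain u where u: "u \<in> Lp" "v = rho u" by blast
      obtain c where c: "u = lc e c" using Lp_lc LpD[OF u(1)] by blast
      define J where "J = {k. k < 8 \<and> odd (c k)}"
      have "u - lc e (ind J) = smul 2 (lc e (\<lambda>k. (c k - ind J k) div 2))"
        unfolding c lc_diff lc_smul unfolding lc_def
        by (intro sum.cong refl) (auto simp: J_def ind_def elim!: oddE)
      then have "rho u = rho (lc e (ind J))" by (metis rho_smul2 rho_diff right_minus_eq)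
      then show "v \<in> F ` Pow {..<8}" unfolding F_def J_def using u by auto
    qed
    show "F ` Pow {..<8} \<subseteq> rho ` Lp" unfolding F_def using lc_in by (auto intro: LpI)
  qed
  have inj: "inj_on F (Pow {..<8})"
  proof (rule inj_onI)
    fix J J' assume J: "J \<in> Pow {..<8}" "J' \<in> Pow {..<8}" and FF: "F J = F J'"
    show "J = J'"
    proof (rule ccontr)
      assume ne: "J \<noteq> J'"
      define c where "c = (\<lambda>k. ind J k - ind J' k)"
      have "\<exists>j<8. odd (c j)"
      proof -
        obtain j where "j \<in> J - J' \<or> j \<in> J' - J" using ne by blast
        then show ?thesis using J unfolding c_def ind_def by (intro exI[of _ j]) auto
      qed
      then obtain y where y: "y \<in> LK3" "odd (\<Sum>j<8. c j * bil (e j) y)" using indep by blast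
      have "rho (lc e c) = 0" using FF unfolding F_def c_def by (simp add: lc_diff[symmetric] rho_diff)
      then obtain w where w: "lc e c = smul 2 w" using rho_eq0_half lc_in by blast
      have "(\<Sum>j<8. c j * bil (e j) y) = bil (lc e c) y" by (simp add: bil_lc_left)
      also have "\<dots> = 2 * bil w y" using w by (simp add: bil_smul_left)
      finally show False using y by simp
    qed
  qed
  show ?thesis unfolding eq card_image[OF inj] by (simp add: card_Pow)
qed

lemma rho_h_ne: "rho h \<noteq> 0"
  using rho_eq0_half[OF h_in(1)] h_not_even by blast

lemma I3_eq: "NN ` rho ` Lp = {0, rho h}"
proof
  show "NN ` rho ` Lp \<subseteq> {0, rho h}"
  proof
    fix v assume "v \<in> NN ` rho ` Lp"
    then obtain u where u: "u \<in> Lp" "v = NN (rho u)" by blast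
    have "v = rho (smul (bil u h div 2) h)"
      using u NN_rho LpD Lp_sg_formula(2)[OF u(1)] by (simp add: pp_def)
    moreover have "rho (smul c h) = 0 \<or> rho (smul c h) = rho h" for c
    proof (cases "even c")
      case True
      then obtain d where "c = 2 * d" by blast
      then have "smul c h = smul 2 (smul d h)" by (simp add: smul_smul)
      then show ?thesis by simp
    next
      case False
      then obtain d where "c = 2 * d + 1" by (metis oddE)
      then have "smul c h - h = smul 2 (smul d h)" by (auto simp: smul_def fun_eq_iff algebra_simps)
      then have "rho (smul c h) - rho h = 0" by (metis rho_smul2 rho_diff)
      then show ?thesis by simp
    qed
    ultimately show "v \<in> {0, rho h}" by auto
  qed
  show "{0, rho h} \<subseteq> NN ` rho ` Lp"
  proof -
    have "NN (rho 0) = 0" using NN_rho[of 0] by (simp add: pp_def)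
    then have "0 \<in> NN ` rho ` Lp" using Lp_zero by force
    moreover have "NN (rho (e 0)) = rho h"
    proof -
      have "NN (rho (e 0)) = rho (smul (bil (e 0) h div 2) h)"
        using NN_rho e_in Lp_sg_formula(2)[OF e_Lp] by (simp add: pp_def)
      moreover obtain d where d: "bil (e 0) h div 2 = 2 * d + 1" using char_e[of 0] by (metis oddE zero_less_numeral)
      moreover have "smul (2 * d + 1) h - h = smul 2 (smul d h)" by (auto simp: smul_def fun_eq_iff algebra_simps)
      ultimately show ?thesis by (metis rho_smul2 rho_diff right_minus_eq)
    qed
    then have "rho h \<in> NN ` rho ` Lp" using e_Lp[of 0] by force
    ultimately show ?thesis by blast
  qed
qed

lemma I4_eq: "NN ` {0, rho h} = {0}"
proof -
  have "NN (rho 0) = 0" using NN_rho[of 0] by (simp add: pp_def)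
  moreover have "NN (rho h) = 0"
  proof -
    have "pp h = smul 2 h" using h_in by (simp add: pp_def smul_two)
    then show ?thesis using NN_rho h_in by simp
  qed
  ultimately show ?thesis by simp
qed

lemma kernel_in_I2: assumes v: "v \<in> V" "NN v = 0" shows "v \<in> rho ` Lp"
proof -
  define I0 where "I0 = V"
  define I1 where "I1 = NN ` I0"
  define I2 where "I2 = NN ` I1"
  have I2e: "I2 = rho ` Lp" unfolding I2_def I1_def I0_def using I2_eq .
  have I3e: "NN ` I2 = {0, rho h}" unfolding I2e by (rule I3_eq)
  have fin0: "finite I0" unfolding I0_def using card_V by simp
  have sub0: "I0 \<subseteq> V" unfolding I0_def by simp
  have z0: "0 \<in> I0" unfolding I0_def by (auto intro: image_eqI[of 0 rho 0])
  have cl0: "\<And>x y. x \<in> I0 \<Longrightarrow> y \<in> I0 \<Longrightarrow> x - y \<in> I0" unfolding I0_def using V_diff by auto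
  have sub1: "I1 \<subseteq> V" unfolding I1_def using image_V[OF sub0] .
  have z1: "0 \<in> I1" unfolding I1_def using image_0[OF sub0 z0] .
  have cl1: "\<And>x y. x \<in> I1 \<Longrightarrow> y \<in> I1 \<Longrightarrow> x - y \<in> I1" unfolding I1_def using image_cl[OF sub0 cl0] by blast
  have sub2: "I2 \<subseteq> V" unfolding I2_def using image_V[OF sub1] .
  have z2: "0 \<in> I2" unfolding I2_def using image_0[OF sub1 z1] .
  have cl2: "\<And>x y. x \<in> I2 \<Longrightarrow> y \<in> I2 \<Longrightarrow> x - y \<in> I2" unfolding I2_def using image_cl[OF sub1 cl1] by blast
  have sub3: "NN ` I2 \<subseteq> V" using image_V[OF sub2] .
  have z3: "0 \<in> NN ` I2" using image_0[OF sub2 z2] .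
  have cl3: "\<And>x y. x \<in> NN ` I2 \<Longrightarrow> y \<in> NN ` I2 \<Longrightarrow> x - y \<in> NN ` I2" using image_cl[OF sub2 cl2] by blast
  have hom0: "NN (x - y) = NN x - NN y" if "x \<in> I0" "y \<in> I0" for x y
    using hom_sub[OF sub0 that] .
  have hom1: "NN (x - y) = NN x - NN y" if "x \<in> I1" "y \<in> I1" for x y
    using hom_sub[OF sub1 that] .
  have hom2: "NN (x - y) = NN x - NN y" if "x \<in> I2" "y \<in> I2" for x y
    using hom_sub[OF sub2 that] .
  have hom3: "NN (x - y) = NN x - NN y" if "x \<in> NN ` I2" "y \<in> NN ` I2" for x y
    using hom_sub[OF sub3 that] .
  have sub10: "I1 \<subseteq> I0" using sub1 unfolding I0_def .
  have sub21: "I2 \<subseteq> I1" unfolding I2_def I1_def using sub10 unfolding I1_def by auto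
  have fin1: "finite I1" using finite_subset[OF sub10 fin0] .
  have fin2: "finite I2" using finite_subset[OF sub21 fin1] .
  have hom: "\<And>A. A \<subseteq> V \<Longrightarrow> (\<And>x y. x \<in> A \<Longrightarrow> y \<in> A \<Longrightarrow> NN (x - y) = NN x - NN y)"
    using NN_diff by blast
  define c0 where "c0 = card {x\<in>I0. NN x = 0}"
  define c1 where "c1 = card {x\<in>I1. NN x = 0}"
  define c2 where "c2 = card {x\<in>I2. NN x = 0}"
  define c3 where "c3 = card {x\<in>NN ` I2. NN x = 0}"
  have e0: "card I0 = c0 * card I1" unfolding c0_def I1_def
    by (rule card_hom[OF fin0 z0 cl0]) (simp_all add: hom0)
  have e1: "card I1 = c1 * card I2" unfolding c1_def I2_def
    by (rule card_hom[OF fin1 z1 cl1]) (simp_all add: hom1)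
  have e2: "card I2 = c2 * card (NN ` I2)" unfolding c2_def
    by (rule card_hom[OF fin2 z2 cl2]) (simp_all add: hom2)
  have "finite (NN ` I2)" using fin2 by simp
  have e3: "card (NN ` I2) = c3 * card (NN ` NN ` I2)" unfolding c3_def
    by (rule card_hom[OF \<open>finite (NN ` I2)\<close> z3 cl3]) (simp_all add: hom3)
  have "NN ` NN ` I2 = {0}" unfolding I3e by (rule I4_eq)
  then have c3v: "c3 = 2" using e3 I3e rho_h_ne by simp
  have cI2: "card I2 = 2 ^ 8" unfolding I2e by (rule card_rho_Lp)
  then have c2v: "c2 = 2 ^ 7" using e2 I3e rho_h_ne by simp
  have cI0: "card I0 = 2 ^ 22" unfolding I0_def using card_V by simp
  have prod: "c0 * c1 = c2 * c2" using e0 e1 cI0 cI2 c2v by simp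
  have le01: "c1 \<le> c0" unfolding c0_def c1_def using sub10 fin0 by (intro card_mono) auto
  have le12: "c2 \<le> c1" unfolding c1_def c2_def using sub21 fin1 by (intro card_mono) auto
  have "c0 = c2"
  proof (rule ccontr)
    assume "c0 \<noteq> c2"
    then have "c2 < c0" using le01 le12 by simp
    then have "c2 * c1 < c0 * c1" using le12 c2v by (intro mult_strict_right_mono) auto
    moreover have "c2 * c2 \<le> c2 * c1" using le12 by simp
    ultimately show False using prod by simp
  qed
  then have "{x\<in>I2. NN x = 0} = {x\<in>I0. NN x = 0}"
    unfolding c0_def c2_def using sub10 sub21 fin0 by (intro card_subset_eq) auto
  then show ?thesis using v unfolding I0_def I2e by blast
qed

lemma claimC: assumes r: "r \<in> Lm" and y: "y \<in> Lm" shows "even (bil (r + sg r) y)"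
proof -
  have rL: "r \<in> LK3" using LmD r by auto
  have "NN (NN (rho r)) = rho (pp (pp r))" using NN_rho pp_LK3 rL by simp
  also have "pp (pp r) = smul 2 (sg r)" using pp_pp[OF rL] LmD[OF r] by simp
  finally have "NN (NN (rho r)) = 0" by (simp only: rho_smul2)
  moreover have "NN (rho r) \<in> V" using NN_V rL by auto
  ultimately have "NN (rho r) \<in> rho ` Lp" using kernel_in_I2 by blast
  then obtain u where u: "u \<in> Lp" "rho (pp r) = rho u" using NN_rho rL by auto
  have uL: "u \<in> LK3" using LpD u by auto
  obtain w where w: "w \<in> LK3" "pp r - u = smul 2 w"
    using rho_eq_iff[OF pp_LK3[OF rL] uL] u(2) by blast
  have "bil (pp r) y = bil u y + 2 * bil w y"
  proof -
    have "pp r = u + smul 2 w" using w by (simp add: algebra_simps)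
    then show ?thesis by (simp add: bil_add_left bil_smul_left)
  qed
  moreover have "bil u y = 0" using Lp_Lm_orth u y by simp
  ultimately show ?thesis by (simp add: pp_def)
qed

end


context K3 begin

lemma Lp_even: assumes "u \<in> Lp" "u' \<in> Lp" shows "even (bil u u')"
proof -
  obtain c where c: "u = lc e c" using Lp_lc LpD[OF assms(1)] by blast
  obtain d where d: "u' = lc e d" using Lp_lc LpD[OF assms(2)] by blast
  have "bil u u' = (\<Sum>j<8. c j * bil (e j) u')" unfolding c by (rule bil_lc_left)
  also have "\<dots> = (\<Sum>j<8. c j * (d j * gk j))"
    unfolding d using bil_lc_e bil_sym by (intro sum.cong refl) (metis lessThan_iff)
  finally have eq: "bil u u' = (\<Sum>j<8. c j * (d j * gk j))" .
  have "even (c j * (d j * gk j))" for j using gk_cases[of j] by auto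
  then show ?thesis unfolding eq by (intro dvd_sum) auto
qed

lemma glue_minus: assumes v: "v \<in> Lm" and ev: "\<And>y. y \<in> Lm \<Longrightarrow> even (bil v y)"
  shows "\<exists>x\<in>LK3. x - tau x = v"
proof -
  have "\<forall>k\<in>{..<8}. \<exists>y. y \<in> LK3 \<and> (\<forall>j<8. even (bil (e j) y - (if j = k then 1 else 0)))"
    using glue by blast
  then have "\<exists>yy. \<forall>k\<in>{..<8}. yy k \<in> LK3 \<and> (\<forall>j<8. even (bil (e j) (yy k) - (if j = k then 1 else 0)))"
    by (rule bchoice)
  then obtain yy where yy: "\<forall>k\<in>{..<8}. yy k \<in> LK3 \<and> (\<forall>j<8. even (bil (e j) (yy k) - (if j = k then 1 else 0)))"
    by blast
  have yyL: "k < 8 \<Longrightarrow> yy k \<in> LK3" for k using yy by auto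
  have yyP: "j < 8 \<Longrightarrow> k < 8 \<Longrightarrow> even (bil (e j) (yy k) - (if j = k then 1 else 0))" for j k
    using yy by auto
  have vL: "v \<in> LK3" using v LmD by auto
  define c where "c = (\<lambda>j. bil v (yy j))"
  define xp where "xp = lc e c"
  have xpLp: "xp \<in> Lp" unfolding xp_def using lc_in by (auto intro: LpI)
  have sumdelta: "even ((\<Sum>j<8. a j * bil (e l) (yy j)) - a l)" if l: "l < 8" for a l
  proof -
    have "(\<Sum>j<8. a j * (if l = j then 1 else 0)) = a l"
    proof -
      have "(\<Sum>j<8. a j * (if l = j then 1 else 0)) = (\<Sum>j<8. if l = j then a j else 0)"
        by (rule sum.cong) auto
      then show ?thesis using l by simp
    qed
    then have "(\<Sum>j<8. a j * bil (e l) (yy j)) - a l = (\<Sum>j<8. a j * (bil (e l) (yy j) - (if l = j then 1 else 0)))"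
      by (simp add: right_diff_distrib sum_subtractf)
    moreover have "even (\<Sum>j<8. a j * (bil (e l) (yy j) - (if l = j then 1 else 0)))"
      using yyP l by (intro dvd_sum) (simp add: eq_commute)
    ultimately show ?thesis by simp
  qed
  have sumdelta2: "even ((\<Sum>k<8. a k * bil (e k) (yy l)) - a l)" if l: "l < 8" for a l
  proof -
    have "(\<Sum>k<8. a k * (if k = l then 1 else 0)) = a l"
    proof -
      have "(\<Sum>k<8. a k * (if k = l then 1 else 0)) = (\<Sum>k<8. if k = l then a k else 0)"
        by (rule sum.cong) auto
      then show ?thesis using l by simp
    qed
    then have "(\<Sum>k<8. a k * bil (e k) (yy l)) - a l = (\<Sum>k<8. a k * (bil (e k) (yy l) - (if k = l then 1 else 0)))"
      by (simp add: right_diff_distrib sum_subtractf)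
    moreover have "even (\<Sum>k<8. a k * (bil (e k) (yy l) - (if k = l then 1 else 0)))"
      using yyP l by (intro dvd_sum) simp
    ultimately show ?thesis by simp
  qed
  have evall: "even (bil (xp + v) y)" if y: "y \<in> LK3" for y
  proof -
    define w where "w = y - (\<Sum>j<8. smul (bil (e j) y) (yy j))"
    have wL: "w \<in> LK3" unfolding w_def using y yyL by (intro LK3_diff LK3_sum LK3_smul) auto
    have "even (bil w (e l))" if l: "l < 8" for l
    proof -
      have "bil (e l) w = bil (e l) y - (\<Sum>j<8. bil (e j) y * bil (e l) (yy j))"
        unfolding w_def by (simp add: bil_diff_right bil_sum_right bil_smul_right)
      then have "bil (e l) w = - ((\<Sum>j<8. bil (e j) y * bil (e l) (yy j)) - bil (e l) y)" by simp
      then show ?thesis using sumdelta[OF l, of "\<lambda>j. bil (e j) y"] bil_sym[of w "e l"] by simp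
    qed
    then obtain u m where um: "u \<in> Lp" "m \<in> Lm" "w = u + m" using split_even[OF wL] by blast
    have "bil (xp + v) w = bil xp u + bil xp m + (bil v u + bil v m)"
      unfolding um(3) by (simp add: bil_add_left bil_add_right)
    moreover have "bil xp m = 0" using Lp_Lm_orth xpLp um by simp
    moreover have "bil v u = 0" using Lp_Lm_orth um v bil_sym by metis
    moreover have "even (bil xp u)" using Lp_even xpLp um by simp
    moreover have "even (bil v m)" using ev um by simp
    ultimately have ew: "even (bil (xp + v) w)" by simp
    have eyy: "even (bil (xp + v) (yy j))" if j: "j < 8" for j
    proof -
      have "bil xp (yy j) = (\<Sum>k<8. c k * bil (e k) (yy j))" unfolding xp_def by (rule bil_lc_left)
      then have "even (bil xp (yy j) - c j)" using sumdelta2[OF j, of c] by simp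
      then show ?thesis by (simp add: bil_add_left c_def)
    qed
    have yw: "y = w + (\<Sum>j<8. smul (bil (e j) y) (yy j))" unfolding w_def by simp
    have "bil (xp + v) y = bil (xp + v) (w + (\<Sum>j<8. smul (bil (e j) y) (yy j)))"
      by (subst yw) (rule refl)
    also have "\<dots> = bil (xp + v) w + (\<Sum>j<8. bil (e j) y * bil (xp + v) (yy j))"
      by (simp only: bil_add_right bil_sum_right bil_smul_right)
    finally have "bil (xp + v) y = bil (xp + v) w + (\<Sum>j<8. bil (e j) y * bil (xp + v) (yy j))" .
    moreover have "even (\<Sum>j<8. bil (e j) y * bil (xp + v) (yy j))" using eyy by (intro dvd_sum) auto
    ultimately show ?thesis using ew by simp
  qed
  have xpvL: "xp + v \<in> LK3" using xpLp LpD vL by auto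
  obtain x where x: "x \<in> LK3" "xp + v = smul 2 x" using even_half[OF xpvL evall] by blast
  have "smul 2 (x - tau x) = smul 2 v"
  proof -
    have t: "tau (xp + v) = smul 2 (tau x)" unfolding x(2) by (simp only: mat_app_smul)
    have "smul 2 (x - tau x) = smul 2 x - smul 2 (tau x)" by (simp add: smul_def fun_eq_iff algebra_simps)
    also have "\<dots> = (xp + v) - tau (xp + v)" using x(2) t by simp
    also have "\<dots> = v + v" using xpLp LpD v LmD by (simp add: mat_app_add)
    finally show ?thesis by (simp add: smul_two)
  qed
  then have "x - tau x = v" by (rule smul_cancel[rotated]) simp
  then show ?thesis using x by blast
qed

end

locale K3r = K3 +
  fixes r :: "nat \<Rightarrow> int" and n :: int
  assumes r_prim: "primitive_vec (Lminus S) r"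
    and rr: "bil r r = -2 * n"
    and n1: "n \<ge> 1"
    and lam_prim: "primitive_sub (Lminus S) (Lam S r)"
begin

abbreviation sr where "sr \<equiv> sg r"

lemma rLm: "r \<in> Lm" using r_prim unfolding primitive_vec_def Lm_eq by auto
lemma rL: "r \<in> LK3" using rLm LmD by auto
lemma srLm: "sr \<in> Lm" using Lm_sg rLm by auto
lemma srL: "sr \<in> LK3" by simp
lemma r_sr: "bil r sr = 0" using Lm_sg_orth rLm by simp
lemma sr_r: "bil sr r = 0" using r_sr bil_sym by metis
lemma sr_sr: "bil sr sr = -2 * n" using iso' rL rr by simp

lemma prim: "r = smul k y \<Longrightarrow> y \<in> Lm \<Longrightarrow> \<bar>k\<bar> = 1"
  using r_prim unfolding primitive_vec_def Lm_eq by auto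

lemma lamprim: "x \<in> Lm \<Longrightarrow> m \<noteq> 0 \<Longrightarrow> smul m x \<in> Lam S r \<Longrightarrow> x \<in> Lam S r"
  using lam_prim unfolding primitive_sub_def Lm_eq by blast

lemma Lam_iff: "x \<in> Lam S r \<longleftrightarrow> (\<exists>a b. x = smul a r + smul b sr)"
  unfolding Lam_def by auto

lemma Lam_Lm: "x \<in> Lam S r \<Longrightarrow> x \<in> Lm"
  unfolding Lam_iff using rLm srLm Lm_smul Lm_add by blast

lemma bil_ab_r: "bil (smul a r + smul b sr) r = -2 * n * a"
  by (simp add: bil_add_left bil_smul_left rr sr_r)
lemma bil_ab_sr: "bil (smul a r + smul b sr) sr = -2 * n * b"
  by (simp add: bil_add_left bil_smul_left r_sr sr_sr)

lemma ab_unique: assumes "smul a r + smul b sr = smul a' r + smul b' sr" shows "a = a'" "b = b'"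
proof -
  have e1: "bil (smul a r + smul b sr) r = bil (smul a' r + smul b' sr) r" using assms by simp
  then have "-2 * n * a = -2 * n * a'" by (simp only: bil_ab_r)
  then show "a = a'" using n1 by auto
  have e2: "bil (smul a r + smul b sr) sr = bil (smul a' r + smul b' sr) sr" using assms by simp
  then have "-2 * n * b = -2 * n * b'" by (simp only: bil_ab_sr)
  then show "b = b'" using n1 by auto
qed

abbreviation K where "K \<equiv> Lam_perp S r"
abbreviation P where "P \<equiv> Pr S r"

lemma K_iff: "k \<in> K \<longleftrightarrow> k \<in> Lm \<and> bil r k = 0 \<and> bil sr k = 0"
proof
  assume k: "k \<in> K"
  have "r = smul 1 r + smul 0 sr" "sr = smul 0 r + smul 1 sr" by simp_all
  then have "r \<in> Lam S r" "sr \<in> Lam S r" unfolding Lam_iff by blast+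
  then show "k \<in> Lm \<and> bil r k = 0 \<and> bil sr k = 0" using k unfolding Lam_perp_def Lm_eq by auto
next
  assume "k \<in> Lm \<and> bil r k = 0 \<and> bil sr k = 0"
  then show "k \<in> K" unfolding Lam_perp_def Lm_eq Lam_def
    by (auto simp: bil_add_left bil_smul_left)
qed

definition proj where "proj z = smul (2 * n) z + smul (bil z r) r + smul (bil z sr) sr"

lemma proj_Lm: "z \<in> Lm \<Longrightarrow> proj z \<in> Lm"
  unfolding proj_def using rLm srLm by (intro Lm_add Lm_smul) auto

lemma proj_K: assumes "z \<in> Lm" shows "proj z \<in> K"
proof -
  have "bil r (proj z) = 0"
    unfolding proj_def by (simp add: bil_add_right bil_smul_right rr r_sr bil_sym[of r z])
  moreover have "bil sr (proj z) = 0"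
    unfolding proj_def by (simp add: bil_add_right bil_smul_right sr_sr sr_r bil_sym[of sr z])
  ultimately show ?thesis using proj_Lm assms K_iff by blast
qed

lemma P_iff: "x \<in> P \<longleftrightarrow> x \<in> LK3 \<and> x - tau x \<in> Lam S r"
proof
  assume xP: "x \<in> P"
  then have xL: "x \<in> LK3" and xk: "\<And>k. k \<in> K \<Longrightarrow> bil x k = 0" unfolding Pr_def by auto
  define z where "z = x - tau x"
  have zLm: "z \<in> Lm" unfolding z_def using minus_tau_Lm[OF xL] .
  have zK: "bil z k = 0" if k: "k \<in> K" for k
  proof -
    have kL: "k \<in> LK3" "tau k = - k" using k K_iff LmD by auto
    have "bil (tau x) k = - bil x k" using tau_adj[OF xL kL(1)] kL by (simp add: bil_minus_right)
    then show ?thesis unfolding z_def using xk[OF k] by (simp add: bil_diff_left)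
  qed
  define z' where "z' = proj z"
  have z'K: "z' \<in> K" unfolding z'_def using proj_K[OF zLm] .
  have z'perp: "bil z' k = 0" if k: "k \<in> K" for k
  proof -
    have "bil r k = 0" "bil sr k = 0" using k K_iff by auto
    then show ?thesis unfolding z'_def proj_def using zK[OF k] by (simp add: bil_add_left bil_smul_left)
  qed
  have z'L: "z' \<in> LK3" using z'K K_iff LmD by auto
  have "z' = 0"
  proof (rule nondeg[OF z'L])
    fix w assume w: "w \<in> LK3"
    define wm where "wm = w - tau w"
    have wmLm: "wm \<in> Lm" unfolding wm_def using minus_tau_Lm[OF w] .
    have "bil z' (proj wm) = 0" using z'perp proj_K[OF wmLm] by simp
    moreover have "bil z' r = 0" "bil z' sr = 0" using z'K K_iff bil_sym by metis+
    ultimately have "2 * n * bil z' wm = 0"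
      unfolding proj_def by (simp add: bil_add_right bil_smul_right)
    then have a: "bil z' wm = 0" using n1 by simp
    have b: "bil z' (w + tau w) = 0" using Lp_Lm_orth[OF plus_tau_Lp[OF w]] z'K K_iff bil_sym by metis
    have eqw: "w + w = wm + (w + tau w)" unfolding wm_def by simp
    have "bil z' (w + w) = bil z' (wm + (w + tau w))" by (simp only: eqw)
    also have "\<dots> = bil z' wm + bil z' (w + tau w)" by (rule bil_add_right)
    finally have "bil z' (w + w) = 0" using a b by simp
    moreover have "bil z' (w + w) = bil z' w + bil z' w" by (rule bil_add_right)
    ultimately show "bil z' w = 0" by simp
  qed
  moreover have "smul (2 * n) z = z' - smul (bil z r) r - smul (bil z sr) sr"
    unfolding z'_def proj_def by (simp add: algebra_simps)
  ultimately have "smul (2 * n) z = smul (- bil z r) r + smul (- bil z sr) sr"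
    by (simp add: smul_def fun_eq_iff)
  then have "smul (2 * n) z \<in> Lam S r" unfolding Lam_iff by blast
  moreover have "2 * n \<noteq> 0" using n1 by simp
  ultimately have "z \<in> Lam S r" using lamprim[OF zLm] by blast
  then show "x \<in> LK3 \<and> x - tau x \<in> Lam S r" using xL unfolding z_def by simp
next
  assume a: "x \<in> LK3 \<and> x - tau x \<in> Lam S r"
  have "bil x k = 0" if k: "k \<in> K" for k
  proof -
    have kL: "k \<in> LK3" "tau k = - k" using k K_iff LmD by auto
    have "bil (tau x) k = - bil x k" using tau_adj[of x k] a kL by (simp add: bil_minus_right)
    moreover have "bil (x - tau x) k = 0" using k a unfolding Lam_perp_def by auto
    ultimately show ?thesis by (simp add: bil_diff_left)
  qed
  then show "x \<in> P" unfolding Pr_def using a by auto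
qed

definition ca where "ca x = - bil (x - tau x) r div (2 * n)"
definition cb where "cb x = - bil (x - tau x) sr div (2 * n)"

lemma coef_of: assumes "x - tau x = smul a r + smul b sr" shows "ca x = a" "cb x = b"
proof -
  have "- bil (x - tau x) r = (2 * n) * a" using assms bil_ab_r by simp
  then show "ca x = a" unfolding ca_def using n1 by simp
  have "- bil (x - tau x) sr = (2 * n) * b" using assms bil_ab_sr by simp
  then show "cb x = b" unfolding cb_def using n1 by simp
qed

lemma coef: assumes "x \<in> P" shows "x - tau x = smul (ca x) r + smul (cb x) sr"
proof -
  obtain a b where ab: "x - tau x = smul a r + smul b sr" using assms P_iff Lam_iff by blast
  then show ?thesis using coef_of[OF ab] by simp
qed

lemma P_add: "x \<in> P \<Longrightarrow> y \<in> P \<Longrightarrow> x + y \<in> P"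
proof -
  assume xy: "x \<in> P" "y \<in> P"
  have "(x + y) - tau (x + y) = smul (ca x + ca y) r + smul (cb x + cb y) sr"
    using coef[OF xy(1)] coef[OF xy(2)] by (simp add: mat_app_add smul_def fun_eq_iff algebra_simps)
  then show ?thesis using xy P_iff Lam_iff by auto
qed

lemma coef_add: assumes "x \<in> P" "y \<in> P" shows "ca (x + y) = ca x + ca y" "cb (x + y) = cb x + cb y"
proof -
  have "(x + y) - tau (x + y) = smul (ca x + ca y) r + smul (cb x + cb y) sr"
    using coef[OF assms(1)] coef[OF assms(2)] by (simp add: mat_app_add smul_def fun_eq_iff algebra_simps)
  then show "ca (x + y) = ca x + ca y" "cb (x + y) = cb x + cb y" using coef_of by auto
qed

lemma P_neg: "x \<in> P \<Longrightarrow> - x \<in> P"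
proof -
  assume x: "x \<in> P"
  have "(- x) - tau (- x) = smul (- ca x) r + smul (- cb x) sr"
    using coef[OF x] by (simp add: mat_app_minus smul_def fun_eq_iff algebra_simps)
  then show ?thesis using x P_iff Lam_iff by auto
qed

lemma P_zero: "0 \<in> P"
proof -
  have "(0::nat\<Rightarrow>int) - tau 0 = smul 0 r + smul 0 sr" by simp
  then show ?thesis using P_iff Lam_iff by blast
qed

definition NK where "NK = {a + b | a b. a \<in> Lplus S \<and> b \<in> Lam S r}"

lemma NK_iff: "x \<in> NK \<longleftrightarrow> x \<in> P \<and> even (ca x) \<and> even (cb x)"
proof
  assume "x \<in> NK"
  then obtain u v where uv: "u \<in> Lp" "v \<in> Lam S r" "x = u + v" unfolding NK_def Lp_eq by blast
  obtain a b where v: "v = smul a r + smul b sr" using uv(2) Lam_iff by blast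
  have vLm: "v \<in> Lm" using Lam_Lm uv(2) .
  have "tau x = u - v" using uv LpD LmD[OF vLm] by (simp add: mat_app_add)
  then have "x - tau x = v + v" using uv(3) by simp
  also have "\<dots> = smul (2 * a) r + smul (2 * b) sr" using v by (simp add: smul_def fun_eq_iff algebra_simps)
  finally have "x - tau x = smul (2 * a) r + smul (2 * b) sr" .
  moreover have "x \<in> LK3" using uv LpD LmD vLm by auto
  ultimately show "x \<in> P \<and> even (ca x) \<and> even (cb x)" using coef_of P_iff Lam_iff by fastforce
next
  assume a: "x \<in> P \<and> even (ca x) \<and> even (cb x)"
  then obtain \<alpha> \<beta> where ab: "ca x = 2 * \<alpha>" "cb x = 2 * \<beta>" by (meson evenE)
  define v where "v = smul \<alpha> r + smul \<beta> sr"
  have vLam: "v \<in> Lam S r" unfolding v_def Lam_iff by blast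
  have vLm: "v \<in> Lm" using Lam_Lm vLam .
  have "x - tau x = smul (2 * \<alpha>) r + smul (2 * \<beta>) sr" using coef[of x] a ab by simp
  also have "\<dots> = v + v" unfolding v_def by (simp add: smul_def fun_eq_iff algebra_simps)
  finally have xv: "x - tau x = v + v" .
  have xL: "x \<in> LK3" using a P_iff by auto
  have "x - v \<in> Lp"
  proof (rule LpI)
    show "x - v \<in> LK3" using xL vLm LmD by auto
    have "tau x = x - (v + v)" using xv by (simp add: algebra_simps)
    then show "tau (x - v) = x - v" using LmD[OF vLm] by (simp add: mat_app_diff algebra_simps)
  qed
  then show "x \<in> NK" unfolding NK_def Lp_eq using vLam by (intro CollectI exI[of _ "x - v"] exI[of _ v]) auto
qed

lemma pair_ideal_eq: "pair_ideal S r = {bil r y | y. y \<in> Lm}"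
  unfolding pair_ideal_def Lm_eq by simp

end


definition dlt :: "nat \<Rightarrow> (nat \<Rightarrow> int)" where "dlt j = (\<lambda>i. if i = j then 1 else 0)"

lemma expand_LK3: assumes "y \<in> LK3" shows "y = (\<Sum>j<22. smul (y j) (dlt j))"
proof
  fix i
  have "(\<Sum>j<22. smul (y j) (dlt j)) i = (\<Sum>j<22. y j * (if i = j then 1 else 0))"
    by (simp add: sum_fun_apply dlt_def)
  also have "\<dots> = (\<Sum>j<22. if i = j then y j else 0)" by (rule sum.cong) auto
  also have "\<dots> = y i" using assms unfolding LK3_def by auto
  finally show "y i = (\<Sum>j<22. smul (y j) (dlt j)) i" by simp
qed

lemma dlt_LK3: "j < 22 \<Longrightarrow> dlt j \<in> LK3" unfolding dlt_def LK3_def by auto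

lemma odd_dvd2: fixes d a :: int assumes "odd d" "d dvd 2 * a" shows "d dvd a"
proof -
  obtain k where k: "d = 2 * k + 1" using assms(1) by (metis oddE)
  have "a = (k + 1) * (2 * a) - a * d" unfolding k by (simp add: algebra_simps)
  moreover have "d dvd (k + 1) * (2 * a) - a * d" using assms(2) by (intro dvd_diff) auto
  ultimately show ?thesis by simp
qed

context K3r begin

lemma claimC_r: "y \<in> Lm \<Longrightarrow> even (bil (r + sr) y)" using claimC rLm by simp

lemma n_odd: assumes evr: "\<And>y. y \<in> Lm \<Longrightarrow> even (bil r y)" shows "odd n"
proof -
  obtain x where x: "x \<in> LK3" "x - tau x = r" using glue_minus[OF rLm evr] by blast
  define xp where "xp = x + tau x"
  have xpLp: "xp \<in> Lp" unfolding xp_def using plus_tau_Lp[OF x(1)] .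
  have xx: "x + x = xp + r" unfolding xp_def using x(2) by (simp add: algebra_simps)
  define c where "c = bil xp h div 2"
  have ch: "bil xp h = 2 * c" unfolding c_def using Lp_sg_formula(1)[OF xpLp] by simp
  have cs: "xp + sg xp = smul c h" unfolding c_def using Lp_sg_formula(2)[OF xpLp] .
  have codd: "odd c"
  proof
    assume "even c"
    then obtain c' where c': "c = c' + c'" by (metis evenE mult_2)
    define z where "z = x + sg x - smul c' h"
    have zL: "z \<in> LK3" unfolding z_def using x(1) h_in by auto
    have sgxx: "sg (x + x) = sg x + sg x" by (rule mat_app_add)
    have "z + z = (x + x) + sg (x + x) - (smul c' h + smul c' h)"
      unfolding z_def sgxx by (simp add: algebra_simps)
    also have "\<dots> = (xp + sg xp) + (r + sr) - smul c h"
      unfolding xx c' by (simp add: mat_app_add smul_def algebra_simps fun_eq_iff)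
    also have "\<dots> = r + sr" using cs by simp
    finally have zz: "z + z = r + sr" .
    have "smul 2 (tau z) = smul 2 (- z)"
    proof -
      have "smul 2 (tau z) = tau (z + z)" by (simp only: smul_two mat_app_add)
      also have "\<dots> = tau r + sg (tau r)" unfolding zz by (simp only: mat_app_add)
      also have "\<dots> = - r + sg (- r)" using LmD[OF rLm] by simp
      also have "\<dots> = - (r + sr)" by (simp add: mat_app_minus)
      also have "\<dots> = smul 2 (- z)" unfolding zz[symmetric] by (simp add: smul_def fun_eq_iff)
      finally show ?thesis .
    qed
    then have "tau z = - z" by (rule smul_cancel[rotated]) simp
    then have zLm: "z \<in> Lm" using zL by (auto intro: LmI)
    have "smul 2 z = smul 1 r + smul 1 sr" using zz by (simp add: smul_two)
    then have "smul 2 z \<in> Lam S r" unfolding Lam_iff by blast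
    then have "z \<in> Lam S r" using lamprim[OF zLm, of 2] by simp
    then obtain \<alpha> \<beta> where ab: "z = smul \<alpha> r + smul \<beta> sr" unfolding Lam_iff by blast
    have "smul (2 * \<alpha>) r + smul (2 * \<beta>) sr = smul 1 r + smul 1 sr"
      using zz ab by (simp add: smul_def fun_eq_iff algebra_simps)
    then have "2 * \<alpha> = 1" by (rule ab_unique)
    then show False by presburger
  qed
  have d4: "4 dvd (bil xp xp - 2 * c)" using char_Lp[OF xpLp] ch by simp
  have "4 * bil x x = bil (x + x) (x + x)" by (simp only: bil_add_left bil_add_right)
  also have "\<dots> = bil xp xp + bil xp r + (bil r xp + bil r r)"
    unfolding xx by (simp only: bil_add_left bil_add_right)
  also have "\<dots> = bil xp xp - 2 * n"
    using Lp_Lm_orth[OF xpLp rLm] bil_sym[of r xp] rr by simp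
  finally have e4: "4 * bil x x = bil xp xp - 2 * n" .
  obtain t where t: "bil x x = 2 * t" using bil_even by blast
  have "4 dvd (8 * t + 2 * n - 2 * c)" using d4 e4 t by (simp add: algebra_simps)
  then show "odd n" using codd by presburger
qed

lemma ideal_one: assumes y0: "y0 \<in> Lm" "odd (bil r y0)" shows "pair_ideal S r = UNIV"
proof -
  let ?I = "{bil r y | y. y \<in> Lm}"
  have Idiff: "a \<in> ?I \<Longrightarrow> b \<in> ?I \<Longrightarrow> a - b \<in> ?I" for a b
  proof -
    assume "a \<in> ?I" "b \<in> ?I"
    then obtain ya yb where "ya \<in> Lm" "yb \<in> Lm" "a = bil r ya" "b = bil r yb" by blast
    then have "a - b = bil r (ya - yb)" "ya - yb \<in> Lm" using Lm_diff by (auto simp: bil_diff_right)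
    then show "a - b \<in> ?I" by blast
  qed
  have Imul: "a \<in> ?I \<Longrightarrow> k * a \<in> ?I" for a k
  proof -
    assume "a \<in> ?I"
    then obtain ya where "ya \<in> Lm" "a = bil r ya" by blast
    then have "k * a = bil r (smul k ya)" "smul k ya \<in> Lm" using Lm_smul by (auto simp: bil_smul_right)
    then show "k * a \<in> ?I" by blast
  qed
  have "\<exists>d. 0 < d \<and> d \<in> ?I"
  proof -
    have "bil r y0 \<noteq> 0" using y0(2) by auto
    moreover have "- bil r y0 \<in> ?I" using Imul[of "bil r y0" "-1"] y0 by auto
    moreover have "bil r y0 \<in> ?I" using y0 by auto
    ultimately show ?thesis by (cases "bil r y0 > 0") force+
  qed
  then obtain d0 where d0: "0 < d0" "d0 \<in> ?I" by blast
  have exm: "\<exists>m::nat. 0 < m \<and> int m \<in> ?I"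
    using d0 by (intro exI[of _ "nat d0"]) simp
  define m where "m = (LEAST m::nat. 0 < m \<and> int m \<in> ?I)"
  have mpos: "0 < m \<and> int m \<in> ?I" unfolding m_def by (rule LeastI_ex[OF exm])
  have mmin: "m \<le> m'" if "0 < m'" "int m' \<in> ?I" for m'
    unfolding m_def by (rule Least_le) (use that in simp)
  define d where "d = int m"
  have dpos: "0 < d \<and> d \<in> ?I" unfolding d_def using mpos by simp
  have dmin: "\<And>d'. 0 < d' \<Longrightarrow> d' \<in> ?I \<Longrightarrow> d \<le> d'"
  proof -
    fix d' :: int assume a: "0 < d'" "d' \<in> ?I"
    then have "m \<le> nat d'" using mmin[of "nat d'"] by simp
    then show "d \<le> d'" unfolding d_def using a by linarith
  qed
  have ddvd: "d dvd t" if t: "t \<in> ?I" for t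
  proof -
    have eqm: "t - (t div d) * d = t mod d" by (simp add: minus_div_mult_eq_mod)
    have "(t div d) * d \<in> ?I" using Imul[of d "t div d"] dpos by blast
    then have "t - (t div d) * d \<in> ?I" by (rule Idiff[OF t])
    then have tI: "t mod d \<in> ?I" by (simp only: eqm)
    have "0 \<le> t mod d" "t mod d < d" using dpos by auto
    moreover have "\<not> 0 < t mod d"
    proof
      assume "0 < t mod d"
      then have "d \<le> t mod d" using dmin tI by blast
      then show False using \<open>t mod d < d\<close> by simp
    qed
    ultimately have "t mod d = 0" by simp
    then show ?thesis by auto
  qed
  have "d dvd bil r y0" using ddvd y0(1) by blast
  then have dodd: "odd d" using y0(2) by (auto elim: dvd_trans)
  define \<phi> where "\<phi> = (\<lambda>j. bil r (dlt j - tau (dlt j)) div d)"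
  obtain x where x: "x \<in> LK3" "\<forall>y. bil x y = (\<Sum>j<22. \<phi> j * y j)" using unimod by blast
  have dphi: "d * \<phi> j = bil r (dlt j - tau (dlt j))" if "j < 22" for j
  proof -
    have "bil r (dlt j - tau (dlt j)) \<in> ?I" using minus_tau_Lm[OF dlt_LK3[OF that]] by blast
    then show ?thesis unfolding \<phi>_def using ddvd by simp
  qed
  have dx: "d * bil x y = bil r (y - tau y)" if y: "y \<in> LK3" for y
  proof -
    have "y - tau y = (\<Sum>j<22. smul (y j) (dlt j - tau (dlt j)))"
    proof -
      have "tau y = (\<Sum>j<22. smul (y j) (tau (dlt j)))"
        by (subst expand_LK3[OF y]) (simp add: mat_app_sum mat_app_smul)
      then show ?thesis
        by (subst (1) expand_LK3[OF y]) (simp add: sum_subtractf[symmetric] smul_def fun_eq_iff algebra_simps sum_fun_apply)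
    qed
    then have "bil r (y - tau y) = (\<Sum>j<22. y j * bil r (dlt j - tau (dlt j)))"
      by (simp add: bil_sum_right bil_smul_right)
    also have "\<dots> = (\<Sum>j<22. y j * (d * \<phi> j))" using dphi by simp
    also have "\<dots> = d * bil x y" using x(2) by (simp add: sum_distrib_left algebra_simps)
    finally show ?thesis by simp
  qed
  have "smul d x - smul 2 r = 0"
  proof (rule nondeg)
    show "smul d x - smul 2 r \<in> LK3" using x rL by auto
    fix y assume y: "y \<in> LK3"
    have "bil r (tau y) = - bil r y" using tau_adj[OF rL y] LmD[OF rLm] by (simp add: bil_minus_left)
    then show "bil (smul d x - smul 2 r) y = 0"
      using dx[OF y] by (simp add: bil_diff_left bil_smul_left bil_diff_right)
  qed
  then have dxr: "smul d x = smul 2 r" by simp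
  define r' where "r' = (\<lambda>i. r i div d)"
  have rdvd: "d dvd r i" for i
  proof -
    have "d * x i = 2 * r i" using fun_cong[OF dxr, of i] by simp
    then have "d dvd 2 * r i" by (metis dvd_triv_left)
    then show ?thesis using odd_dvd2 dodd by blast
  qed
  have rr': "r = smul d r'" unfolding r'_def smul_def using rdvd by (auto simp: fun_eq_iff)
  have r'L: "r' \<in> LK3" using rL unfolding r'_def LK3_def by auto
  have "smul d (tau r') = smul d (- r')"
  proof -
    have "smul d (tau r') = tau r" unfolding rr' by (simp add: mat_app_smul)
    also have "\<dots> = - r" using LmD[OF rLm] by simp
    also have "\<dots> = smul d (- r')" unfolding rr' by (simp add: smul_def fun_eq_iff)
    finally show ?thesis .
  qed
  moreover have dne: "d \<noteq> 0" using dpos by simp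
  ultimately have "tau r' = - r'" using smul_cancel[OF dne] by blast
  then have "r' \<in> Lm" using r'L by (rule LmI[rotated])
  then have "\<bar>d\<bar> = 1" by (rule prim[OF rr'])
  then have "d = 1" using dpos by simp
  then have one: "1 \<in> ?I" using dpos by simp
  have "t \<in> ?I" for t using Imul[OF one, of t] by simp
  then show ?thesis unfolding pair_ideal_eq by auto
qed

definition G where "G = lat_group P"

lemma G_simps[simp]: "carrier G = P" "mult G = (+)" "one G = 0"
  unfolding G_def lat_group_def by simp_all

lemma G_group: "group G"
proof (rule groupI)
  show "\<And>x y. x \<in> carrier G \<Longrightarrow> y \<in> carrier G \<Longrightarrow> x \<otimes>\<^bsub>G\<^esub> y \<in> carrier G" using P_add by simp
  show "\<one>\<^bsub>G\<^esub> \<in> carrier G" using P_zero by simp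
  show "\<And>x y z. x \<in> carrier G \<Longrightarrow> y \<in> carrier G \<Longrightarrow> z \<in> carrier G \<Longrightarrow>
     x \<otimes>\<^bsub>G\<^esub> y \<otimes>\<^bsub>G\<^esub> z = x \<otimes>\<^bsub>G\<^esub> (y \<otimes>\<^bsub>G\<^esub> z)" by (simp add: add.assoc)
  show "\<And>x. x \<in> carrier G \<Longrightarrow> \<one>\<^bsub>G\<^esub> \<otimes>\<^bsub>G\<^esub> x = x" by simp
  show "\<And>x. x \<in> carrier G \<Longrightarrow> \<exists>y\<in>carrier G. y \<otimes>\<^bsub>G\<^esub> x = \<one>\<^bsub>G\<^esub>"
    using P_neg by (metis G_simps add.left_inverse)
qed

lemma M_eq: "M_r S r = G Mod NK"
  unfolding M_r_def G_def NK_def ..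

lemma elem_P: assumes "x \<in> LK3" "x - tau x = smul a r + smul b sr"
  shows "x \<in> P" "ca x = a" "cb x = b"
  using assms P_iff Lam_iff coef_of by blast+

lemma case_two: assumes ev: "\<And>y. y \<in> Lm \<Longrightarrow> even (bil r y)"
  shows "M_r S r \<cong> DirProd (integer_mod_group 2) (integer_mod_group 2)"
proof -
  let ?H = "DirProd (integer_mod_group 2) (integer_mod_group 2)"
  define f where "f = (\<lambda>x. (ca x mod 2, cb x mod 2))"
  have Hgrp: "group ?H" by (intro DirProd_group group_integer_mod_group)
  have hom: "f \<in> hom G ?H"
  proof (rule homI)
    show "\<And>x. x \<in> carrier G \<Longrightarrow> f x \<in> carrier ?H"
      unfolding f_def by (simp add: carrier_integer_mod_group)
    show "\<And>x y. x \<in> carrier G \<Longrightarrow> y \<in> carrier G \<Longrightarrow> f (x \<otimes>\<^bsub>G\<^esub> y) = f x \<otimes>\<^bsub>?H\<^esub> f y"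
      unfolding f_def by (simp add: coef_add mod_add_eq)
  qed
  interpret gh: group_hom G ?H f
    by (intro group_hom.intro group_hom_axioms.intro G_group Hgrp hom)
  obtain x1 where x1: "x1 \<in> LK3" "x1 - tau x1 = r" using glue_minus[OF rLm ev] by blast
  have x1': "x1 - tau x1 = smul 1 r + smul 0 sr" using x1 by simp
  have x2': "sg x1 - tau (sg x1) = smul 0 r + smul 1 sr" using x1 by (simp add: mat_app_diff[symmetric])
  note p1 = elem_P[OF x1(1) x1'] and p2 = elem_P[OF mat_app_LK3 x2']
  have "f ` carrier G = carrier ?H"
  proof
    show "f ` carrier G \<subseteq> carrier ?H" unfolding f_def by (auto simp: carrier_integer_mod_group)
    show "carrier ?H \<subseteq> f ` carrier G"
    proof
      fix ab assume "ab \<in> carrier ?H"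
      then have ab: "ab \<in> {0,1} \<times> {0,1}" by (auto simp: carrier_integer_mod_group)
      have "f 0 = (0, 0)" using elem_P[of 0 0 0] by (simp add: f_def)
      moreover have "f x1 = (1, 0)" using p1 by (simp add: f_def)
      moreover have "f (sg x1) = (0, 1)" using p2 by (simp add: f_def)
      moreover have "f (x1 + sg x1) = (1, 1)" using p1 p2 coef_add by (simp add: f_def)
      moreover have "0 \<in> P" "x1 \<in> P" "sg x1 \<in> P" "x1 + sg x1 \<in> P" using p1 p2 P_zero P_add by auto
      ultimately show "ab \<in> f ` carrier G" using ab by auto (metis image_eqI G_simps(1))+
    qed
  qed
  then have iso: "G Mod kernel G ?H f \<cong> ?H" by (rule gh.FactGroup_iso)
  have "kernel G ?H f = NK"
  proof (rule Set.set_eqI)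
    fix x
    have "x \<in> kernel G ?H f \<longleftrightarrow> x \<in> P \<and> ca x mod 2 = 0 \<and> cb x mod 2 = 0" unfolding kernel_def f_def by simp
    also have "\<dots> \<longleftrightarrow> x \<in> P \<and> even (ca x) \<and> even (cb x)"
      by (simp only: even_iff_mod_2_eq_zero)
    also have "\<dots> \<longleftrightarrow> x \<in> NK" using NK_iff by simp
    finally show "x \<in> kernel G ?H f \<longleftrightarrow> x \<in> NK" .
  qed
  then show ?thesis using iso M_eq by simp
qed

lemma ca_cb: assumes x: "x \<in> P" and one: "1 \<in> pair_ideal S r" shows "even (ca x - cb x)"
proof (rule ccontr)
  assume odd: "odd (ca x - cb x)"
  obtain y1 where y1: "y1 \<in> Lm" "bil r y1 = 1" using one unfolding pair_ideal_eq by auto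
  have xL: "x \<in> LK3" using x P_iff by auto
  have y1L: "y1 \<in> LK3" "tau y1 = - y1" using LmD y1 by auto
  have "bil (tau x) y1 = - bil x y1" using tau_adj[OF xL y1L(1)] y1L by (simp add: bil_minus_right)
  then have "bil (x - tau x) y1 = 2 * bil x y1" by (simp add: bil_diff_left)
  then have e1: "even (ca x * bil r y1 + cb x * bil sr y1)"
    using coef[OF x] by (simp add: bil_add_left bil_smul_left)
  have e2: "even (bil r y1 + bil sr y1)" using claimC_r[OF y1(1)] by (simp add: bil_add_left)
  have "(ca x - cb x) * bil r y1 = (ca x * bil r y1 + cb x * bil sr y1) - cb x * (bil r y1 + bil sr y1)"
    by (simp add: algebra_simps)
  then have "even ((ca x - cb x) * bil r y1)" using e1 e2 by simp
  then show False using odd y1 by simp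
qed

lemma case_one: assumes one: "pair_ideal S r = UNIV"
  shows "M_r S r \<cong> integer_mod_group 2"
proof -
  let ?H = "integer_mod_group 2"
  define f where "f = (\<lambda>x. ca x mod 2)"
  have hom: "f \<in> hom G ?H"
  proof (rule homI)
    show "\<And>x. x \<in> carrier G \<Longrightarrow> f x \<in> carrier ?H"
      unfolding f_def by (simp add: carrier_integer_mod_group)
    show "\<And>x y. x \<in> carrier G \<Longrightarrow> y \<in> carrier G \<Longrightarrow> f (x \<otimes>\<^bsub>G\<^esub> y) = f x \<otimes>\<^bsub>?H\<^esub> f y"
      unfolding f_def by (simp add: coef_add mod_add_eq)
  qed
  interpret gh: group_hom G ?H f
    by (intro group_hom.intro group_hom_axioms.intro G_group group_integer_mod_group hom)
  have evC: "\<And>y. y \<in> Lm \<Longrightarrow> even (bil (r + sr) y)" using claimC_r by blast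
  obtain x3 where x3: "x3 \<in> LK3" "x3 - tau x3 = r + sr"
    using glue_minus[OF Lm_add[OF rLm srLm] evC] by blast
  have x3': "x3 - tau x3 = smul 1 r + smul 1 sr" using x3 by simp
  note p3 = elem_P[OF x3(1) x3']
  have "f ` carrier G = carrier ?H"
  proof
    show "f ` carrier G \<subseteq> carrier ?H" unfolding f_def by (auto simp: carrier_integer_mod_group)
    show "carrier ?H \<subseteq> f ` carrier G"
    proof
      fix a assume "a \<in> carrier ?H"
      then have a: "a = 0 \<or> a = 1" by (auto simp: carrier_integer_mod_group)
      have "f 0 = 0" using elem_P[of 0 0 0] by (simp add: f_def)
      moreover have "f x3 = 1" using p3 by (simp add: f_def)
      moreover have "0 \<in> P" "x3 \<in> P" using p3 P_zero by auto
      ultimately show "a \<in> f ` carrier G" using a by (auto intro: image_eqI)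
    qed
  qed
  then have iso: "G Mod kernel G ?H f \<cong> ?H" by (rule gh.FactGroup_iso)
  have one': "1 \<in> pair_ideal S r" using one by simp
  have evq: "even (ca x) = even (cb x)" if "x \<in> P" for x using ca_cb[OF that one'] by presburger
  have "kernel G ?H f = NK"
  proof (rule Set.set_eqI)
    fix x
    have "x \<in> kernel G ?H f \<longleftrightarrow> x \<in> P \<and> ca x mod 2 = 0" unfolding kernel_def f_def by simp
    also have "\<dots> \<longleftrightarrow> x \<in> P \<and> even (ca x) \<and> even (cb x)"
      using evq[of x] by (auto simp only: even_iff_mod_2_eq_zero)
    also have "\<dots> \<longleftrightarrow> x \<in> NK" using NK_iff by simp
    finally show "x \<in> kernel G ?H f \<longleftrightarrow> x \<in> NK" .
  qed
  then show ?thesis using iso M_eq by simp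
qed

lemma main:
  "(even n \<longrightarrow> M_r S r \<cong> integer_mod_group 2 \<and> pair_ideal S r = UNIV) \<and>
   (odd n \<longrightarrow>
      (pair_ideal S r = {2 * k | k. True} \<longrightarrow>
         M_r S r \<cong> DirProd (integer_mod_group 2) (integer_mod_group 2)) \<and>
      (pair_ideal S r = UNIV \<longrightarrow> M_r S r \<cong> integer_mod_group 2))"
proof (intro conjI impI)
  assume en: "even n"
  have "\<exists>y\<in>Lm. odd (bil r y)" using n_odd en by blast
  then show "pair_ideal S r = UNIV" using ideal_one by blast
  then show "M_r S r \<cong> integer_mod_group 2" by (rule case_one)
next
  assume "pair_ideal S r = {2 * k | k. True}"
  then have eqI: "{bil r y | y. y \<in> Lm} = {2 * k | k. True}" unfolding pair_ideal_eq .
  have "even (bil r y)" if y: "y \<in> Lm" for y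
  proof -
    have "bil r y \<in> {bil r y | y. y \<in> Lm}" using y by blast
    then have "bil r y \<in> {2 * k | k. True}" unfolding eqI .
    then show ?thesis by auto
  qed
  then show "M_r S r \<cong> DirProd (integer_mod_group 2) (integer_mod_group 2)" by (rule case_two)
next
  assume "pair_ideal S r = UNIV"
  then show "M_r S r \<cong> integer_mod_group 2" by (rule case_one)
qed

end

theorem proposition3p2:
  fixes S :: "nat \<Rightarrow> nat \<Rightarrow> int" and r :: "nat \<Rightarrow> int" and n :: int
  assumes "quartic_K3_sigma S"
    and "primitive_vec (Lminus S) r"
    and "bil r r = -2 * n"
    and "n \<ge> 1"
    and "primitive_sub (Lminus S) (Lam S r)"
  shows "(even n \<longrightarrow> M_r S r \<cong> integer_mod_group 2 \<and> pair_ideal S r = UNIV) \<and>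
         (odd n \<longrightarrow>
            (pair_ideal S r = {2 * k | k. True} \<longrightarrow>
               M_r S r \<cong> DirProd (integer_mod_group 2) (integer_mod_group 2)) \<and>
            (pair_ideal S r = UNIV \<longrightarrow> M_r S r \<cong> integer_mod_group 2))"
proof -
  have "\<exists>e h. K3 S e h" using assms(1) unfolding quartic_K3_sigma_def K3_def
    by (elim conjE exE) (intro exI conjI; assumption)
  then obtain e h where eh: "K3 S e h" by blast
  have "K3r S e h r n"
    by (rule K3r.intro[OF eh K3r_axioms.intro]) (rule assms)+
  then show ?thesis by (rule K3r.main)
qed


end
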